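(* Let $A\in\mathbb{R}^{n\times n}$ be symmetric (not necessarily PSD), let $L>0$, and assume every nonzero eigenvalue of $A$ has magnitude at least $L$. Let $S\in\mathbb{R}^{k\times n}$ satisfy Assumption L for $A$ with parameter $L$. Then for every $i$ with $\lambda_i(A)>0$, the matrix $SAS^T$ has at least $i$ eigenvalues and $\lambda_i(SAS^T)\ge\lambda_i(A)-51L$.
   Context: $\lambda_i(M)$ denotes the $i$-th largest eigenvalue of a symmetric matrix $M$. $S$ is an $\alpha$-distortion subspace embedding for $X$ (or its column span) if $(1-\alpha)\|Xv\|^2\le\|SXv\|^2\le(1+\alpha)\|Xv\|^2$ for all $v$. Assumption L (for symmetric $A$ and $L>0$): for every $\lambda\ge L$, $S$ is a $\min(L/\lambda,1/10)$-distortion subspace embedding for the span of all eigenvectors of $A$ whose eigenvalue has magnitude at least $\lambda$. *)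

theory Defs
  imports "Jordan_Normal_Form.Char_Poly" "HOL-Computational_Algebra.Polynomial" "HOL-Library.Multiset"
begin

definition eigvals_desc :: "real mat \<Rightarrow> real list" where
  "eigvals_desc M = rev (sorted_list_of_multiset (proots (char_poly M)))"

definition num_eigvals :: "real mat \<Rightarrow> nat" where
  "num_eigvals M = size (proots (char_poly M))"

(* lambda_i(M), i-th largest eigenvalue, 1-indexed *)
definition lam :: "real mat \<Rightarrow> nat \<Rightarrow> real" where
  "lam M i = eigvals_desc M ! (i - 1)"

definition eig_span :: "real mat \<Rightarrow> real \<Rightarrow> real vec set" where
  "eig_span A t = {x. \<exists>m (c :: nat \<Rightarrow> real) (v :: nat \<Rightarrow> real vec) (mu :: nat \<Rightarrow> real).
       (\<forall>j<m. eigenvector A (v j) (mu j) \<and> \<bar>mu j\<bar> \<ge> t) \<and>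
       x = finsum_vec TYPE(real) (dim_row A) (\<lambda>j. c j \<cdot>\<^sub>v v j) {..<m}}"

definition subspace_embedding :: "real mat \<Rightarrow> real \<Rightarrow> real vec set \<Rightarrow> bool" where
  "subspace_embedding S \<alpha> U = (\<forall>x\<in>U.
      (1 - \<alpha>) * (x \<bullet> x) \<le> (S *\<^sub>v x) \<bullet> (S *\<^sub>v x) \<and>
      (S *\<^sub>v x) \<bullet> (S *\<^sub>v x) \<le> (1 + \<alpha>) * (x \<bullet> x))"

definition assumption_L :: "real mat \<Rightarrow> real mat \<Rightarrow> real \<Rightarrow> bool" where
  "assumption_L S A L = (\<forall>t\<ge>L. subspace_embedding S (min (L / t) (1/10)) (eig_span A t))"

end

theory Submission
  imports Defs "Jordan_Normal_Form.Schur_Decomposition"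
begin


lemma real_sym_eigvec:
  fixes A :: "real mat"
  assumes A: "A \<in> carrier_mat n n" and sym: "A\<^sup>T = A" and n: "n > 0"
  shows "\<exists>e v. v \<in> carrier_vec n \<and> v \<noteq> 0\<^sub>v n \<and> A *\<^sub>v v = e \<cdot>\<^sub>v v"
proof -
  define Ac where "Ac = map_mat complex_of_real A"
  have Ac: "Ac \<in> carrier_mat n n" using A unfolding Ac_def by auto
  from char_poly_factorized[OF Ac] obtain as where
    cp: "char_poly Ac = (\<Prod>a\<leftarrow>as. [:- a, 1:])" and len: "length as = n" by blast
  from len n obtain a rest where as: "as = a # rest" by (cases as) auto
  have "poly (char_poly Ac) a = 0" unfolding cp as by simp
  hence "eigenvalue Ac a" using eigenvalue_root_char_poly[OF Ac] by simp
  then obtain w where ev: "eigenvector Ac w a" unfolding eigenvalue_def by blast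
  hence w: "w \<in> carrier_vec n" and w0: "w \<noteq> 0\<^sub>v n" and Aw: "Ac *\<^sub>v w = a \<cdot>\<^sub>v w"
    using Ac unfolding eigenvector_def by auto
  have sym': "\<And>i j. i < n \<Longrightarrow> j < n \<Longrightarrow> A $$ (i,j) = A $$ (j,i)"
  proof -
    fix i j assume "i < n" "j < n"
    hence "A\<^sup>T $$ (i,j) = A $$ (j,i)" using A by auto
    thus "A $$ (i,j) = A $$ (j,i)" using sym by simp
  qed
  have comp: "\<And>i. i < n \<Longrightarrow> (\<Sum>j<n. of_real (A $$ (i,j)) * w $ j) = a * w $ i"
  proof -
    fix i assume i: "i < n"
    have "(Ac *\<^sub>v w) $ i = a * w $ i" using Aw i w by simp
    moreover have "(Ac *\<^sub>v w) $ i = (\<Sum>j<n. of_real (A $$ (i,j)) * w $ j)"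
      using i A w unfolding Ac_def by (auto simp: scalar_prod_def lessThan_atLeast0)
    ultimately show "(\<Sum>j<n. of_real (A $$ (i,j)) * w $ j) = a * w $ i" by simp
  qed
  define s where "s = (\<Sum>i<n. \<Sum>j<n. cnj (w $ i) * of_real (A $$ (i,j)) * w $ j)"
  define N where "N = (\<Sum>i<n. cnj (w $ i) * w $ i)"
  have s1: "s = a * N"
  proof -
    have "s = (\<Sum>i<n. cnj (w $ i) * (\<Sum>j<n. of_real (A $$ (i,j)) * w $ j))"
      unfolding s_def by (simp add: sum_distrib_left mult.assoc)
    also have "\<dots> = (\<Sum>i<n. cnj (w $ i) * (a * w $ i))" using comp by simp
    also have "\<dots> = a * N" unfolding N_def by (simp add: sum_distrib_left algebra_simps)
    finally show ?thesis .
  qed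
  have s2: "cnj s = s"
  proof -
    have "cnj s = (\<Sum>i<n. \<Sum>j<n. w $ i * of_real (A $$ (i,j)) * cnj (w $ j))"
      unfolding s_def by (simp add: cnj_sum)
    also have "\<dots> = (\<Sum>j<n. \<Sum>i<n. w $ i * of_real (A $$ (i,j)) * cnj (w $ j))"
      by (rule sum.swap)
    also have "\<dots> = s" unfolding s_def
      by (intro sum.cong refl, auto simp: sym' mult.commute mult.left_commute)
    finally show ?thesis .
  qed
  have Nreal: "cnj N = N" unfolding N_def by (simp add: cnj_sum mult.commute)
  have N0: "N \<noteq> 0"
  proof
    assume N0: "N = 0"
    have "Re N = (\<Sum>i<n. (cmod (w $ i))\<^sup>2)" unfolding N_def
      by (simp add: Re_sum complex_mult_cnj cmod_def power2_eq_square)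
    hence "(\<Sum>i<n. (cmod (w $ i))\<^sup>2) = 0" using N0 by simp
    hence "\<forall>i\<in>{..<n}. (cmod (w $ i))\<^sup>2 = 0" by (subst (asm) sum_nonneg_eq_0_iff) auto
    hence "w = 0\<^sub>v n" using w by (intro eq_vecI) auto
    thus False using w0 by simp
  qed
  have "cnj a * N = a * N" using s1 s2 Nreal by (metis complex_cnj_mult)
  hence ca: "cnj a = a" using N0 by simp
  define r where "r = Re a"
  have ar: "a = of_real r" unfolding r_def using ca by (metis Reals_cnj_iff complex_is_Real_iff of_real_Re)
  have "char_poly Ac = map_poly of_real (char_poly A)"
    unfolding Ac_def by (rule of_real_hom.char_poly_hom[OF A])
  hence "of_real (poly (char_poly A) r) = (0::complex)"
    using \<open>poly (char_poly Ac) a = 0\<close> unfolding ar by (simp add: of_real_hom.poly_map_poly)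
  hence "poly (char_poly A) r = 0" by simp
  hence "eigenvalue A r" using eigenvalue_root_char_poly[OF A] by simp
  then obtain v where "eigenvector A v r" unfolding eigenvalue_def by blast
  thus ?thesis using A unfolding eigenvector_def by auto
qed


lemma conj_real_vec[simp]: "conjugate (w :: real vec) = w"
  by (rule eq_vecI, auto)

lemma cscalar_real[simp]: "(v :: real vec) \<bullet>c w = v \<bullet> w"
  by simp

lemma orth_completion:
  fixes v :: "real vec"
  assumes v: "v \<in> carrier_vec n" and v1: "v \<bullet> v = 1"
  shows "\<exists>W \<in> carrier_mat n n. W\<^sup>T * W = 1\<^sub>m n \<and> col W 0 = v"
proof -
  interpret cof_vec_space n "TYPE(real)" .
  have v0: "v \<noteq> 0\<^sub>v n" using v1 v by auto
  define b where "b = basis_completion v"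
  from basis_completion[OF v v0, folded b_def]
  have dist_b: "distinct b" and indep: "\<not> lin_dep (set b)" and b: "set b \<subseteq> carrier_vec n"
    and hdb: "hd b = v" and len_b: "length b = n" by auto
  have n: "n > 0" using len_b hdb v0 v by (cases b, auto)
  from hdb len_b n obtain vs where bv: "b = v # vs" by (cases b, auto)
  define ws where "ws = gram_schmidt n b"
  from gram_schmidt_result[OF b dist_b indep ws_def]
  have ws: "set ws \<subseteq> carrier_vec n" "corthogonal ws" "length ws = n" 
    by (auto simp: len_b)
  from gram_schmidt_hd[OF v, of vs, folded bv] have hdws: "hd ws = v" unfolding ws_def .
  define ws' where "ws' = map (\<lambda>w. (1 / sqrt (w \<bullet> w)) \<cdot>\<^sub>v w) ws"
  have len': "length ws' = n" unfolding ws'_def using ws by simp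
  have ws'i: "\<And>i. i < n \<Longrightarrow> ws' ! i = (1 / sqrt (ws ! i \<bullet> ws ! i)) \<cdot>\<^sub>v ws ! i"
    unfolding ws'_def using ws by simp
  have wsc: "\<And>i. i < n \<Longrightarrow> ws ! i \<in> carrier_vec n" using ws by auto
  have ws'c: "\<And>i. i < n \<Longrightarrow> ws' ! i \<in> carrier_vec n" using wsc ws'i by simp
  have orth: "\<And>i j. i < n \<Longrightarrow> j < n \<Longrightarrow> (ws ! i \<bullet> ws ! j = 0) = (i \<noteq> j)"
    using corthogonalD[OF ws(2)] ws(3) by simp
  have pos: "\<And>i. i < n \<Longrightarrow> ws ! i \<bullet> ws ! i > 0"
  proof -
    fix i assume i: "i < n"
    have "ws ! i \<bullet> ws ! i \<ge> 0" using conjugate_square_ge_0_vec[of "ws ! i"] by simp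
    moreover have "ws ! i \<bullet> ws ! i \<noteq> 0" using orth[OF i i] by simp
    ultimately show "ws ! i \<bullet> ws ! i > 0" by simp
  qed
  define W where "W = mat_of_cols n ws'"
  have W: "W \<in> carrier_mat n n" unfolding W_def using len' by auto
  have colW: "\<And>i. i < n \<Longrightarrow> col W i = ws' ! i"
    unfolding W_def using len' ws'c by (simp add: col_mat_of_cols)
  have "W\<^sup>T * W = 1\<^sub>m n"
  proof (rule eq_matI)
    fix i j assume i: "i < dim_row (1\<^sub>m n)" and j: "j < dim_col (1\<^sub>m n)"
    hence i: "i < n" and j: "j < n" by auto
    have "(W\<^sup>T * W) $$ (i,j) = ws' ! i \<bullet> ws' ! j"
      using W i j colW by (simp add: row_transpose)
    also have "\<dots> = (1 / sqrt (ws ! i \<bullet> ws ! i)) * (1 / sqrt (ws ! j \<bullet> ws ! j)) * (ws ! i \<bullet> ws ! j)"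
      unfolding ws'i[OF i] ws'i[OF j] using wsc[OF i] wsc[OF j]
      by (simp add: smult_scalar_prod_distrib scalar_prod_smult_right)
    also have "\<dots> = 1\<^sub>m n $$ (i,j)"
    proof (cases "i = j")
      case True
      have p: "sqrt (ws ! i \<bullet> ws ! i) > 0" using pos[OF i] by simp
      have "(1 / sqrt (ws ! i \<bullet> ws ! i)) * (1 / sqrt (ws ! i \<bullet> ws ! i)) * (ws ! i \<bullet> ws ! i) = 1"
        using pos[OF i] p by (simp add: field_simps)
      thus ?thesis using True i by simp
    next
      case False
      thus ?thesis using orth[OF i j] i j by simp
    qed
    finally show "(W\<^sup>T * W) $$ (i,j) = 1\<^sub>m n $$ (i,j)" .
  qed (insert W, auto)
  moreover have "col W 0 = v"
  proof -
    have "ws ! 0 = v" using hdws ws(3) n by (cases ws, auto)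
    thus ?thesis using colW[OF n] ws'i[OF n] v1 by simp
  qed
  ultimately show ?thesis using W by blast
qed


lemma assoc4:
  assumes "A \<in> carrier_mat n n" "B \<in> carrier_mat n n" "C \<in> carrier_mat n n" "D \<in> carrier_mat n n"
  shows "(A * B) * (C * D) = A * (B * C) * D"
proof -
  have "(A * B) * (C * D) = A * (B * (C * D))" by (rule assoc_mult_mat[of A n n B n "C * D" n]) (use assms in auto)
  also have "B * (C * D) = (B * C) * D" by (rule assoc_mult_mat[of B n n C n D n, symmetric]) (use assms in auto)
  also have "A * ((B * C) * D) = (A * (B * C)) * D" by (rule assoc_mult_mat[of A n n "B * C" n D n, symmetric]) (use assms in auto)
  finally show ?thesis .
qed

lemma spectral_real_sym:
  fixes A :: "real mat"
  assumes "A \<in> carrier_mat n n" "A\<^sup>T = A"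
  shows "\<exists>U es. U \<in> carrier_mat n n \<and> U\<^sup>T * U = 1\<^sub>m n \<and> length es = n \<and>
     U\<^sup>T * A * U = mat n n (\<lambda>(i,j). if i = j then es ! i else 0)"
  using assms
proof (induction n arbitrary: A)
  case 0
  show ?case
    by (rule exI[of _ "1\<^sub>m 0"], rule exI[of _ "[]"], insert 0, auto intro!: eq_matI)
next
  case (Suc n)
  have A: "A \<in> carrier_mat (Suc n) (Suc n)" and sym: "A\<^sup>T = A" by fact+
  from real_sym_eigvec[OF A sym] obtain e v0 where
    v0: "v0 \<in> carrier_vec (Suc n)" "v0 \<noteq> 0\<^sub>v (Suc n)" "A *\<^sub>v v0 = e \<cdot>\<^sub>v v0" by auto
  have p: "v0 \<bullet> v0 > 0" using conjugate_square_greater_0_vec[OF v0(1)] v0(2) by simp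
  define v where "v = (1 / sqrt (v0 \<bullet> v0)) \<cdot>\<^sub>v v0"
  have v: "v \<in> carrier_vec (Suc n)" unfolding v_def using v0 by simp
  have v1: "v \<bullet> v = 1" unfolding v_def using v0(1) p
    by (simp add: smult_scalar_prod_distrib scalar_prod_smult_right)
  have Av: "A *\<^sub>v v = e \<cdot>\<^sub>v v" unfolding v_def using v0 A
    by (simp add: mult_mat_vec smult_smult_assoc mult.commute)
  from orth_completion[OF v v1] obtain W where W: "W \<in> carrier_mat (Suc n) (Suc n)"
    and WW: "W\<^sup>T * W = 1\<^sub>m (Suc n)" and Wv: "col W 0 = v" by blast
  define A' where "A' = W\<^sup>T * A * W"
  have A': "A' \<in> carrier_mat (Suc n) (Suc n)" unfolding A'_def using W A by auto
  have symA': "A'\<^sup>T = A'"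
  proof -
    have WA: "W\<^sup>T * A \<in> carrier_mat (Suc n) (Suc n)" using W A by auto
    have "A'\<^sup>T = W\<^sup>T * (W\<^sup>T * A)\<^sup>T" unfolding A'_def
      using transpose_mult[OF WA W] by simp
    also have "(W\<^sup>T * A)\<^sup>T = A\<^sup>T * W" using transpose_mult[of "W\<^sup>T" "Suc n" "Suc n" A "Suc n"] W A by simp
    finally show ?thesis unfolding A'_def sym using W A by (simp add: assoc_mult_mat[of _ "Suc n" "Suc n"])
  qed
  have c0: "\<And>i. i < Suc n \<Longrightarrow> A' $$ (i,0) = (if i = 0 then e else 0)"
  proof -
    fix i assume i: "i < Suc n"
    have "A' $$ (i,0) = row (W\<^sup>T * A) i \<bullet> v" unfolding A'_def
      by (subst index_mult_mat(1)) (use i W A Wv in auto)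
    also have "\<dots> = ((W\<^sup>T * A) *\<^sub>v v) $ i"
      by (subst index_mult_mat_vec) (use i W A in auto)
    also have "(W\<^sup>T * A) *\<^sub>v v = e \<cdot>\<^sub>v (W\<^sup>T *\<^sub>v v)"
      using W A v Av by (simp add: mult_mat_vec[of _ "Suc n" "Suc n"])
    also have "(e \<cdot>\<^sub>v (W\<^sup>T *\<^sub>v v)) $ i = e * (row W\<^sup>T i \<bullet> col W 0)" using i W Wv by simp
    also have "row W\<^sup>T i \<bullet> col W 0 = (W\<^sup>T * W) $$ (i,0)" using i W by simp
    also have "\<dots> = (if i = 0 then 1 else 0)" unfolding WW using i by simp
    finally show "A' $$ (i,0) = (if i = 0 then e else 0)" by simp
  qed
  have symA'': "\<And>i j. i < Suc n \<Longrightarrow> j < Suc n \<Longrightarrow> A' $$ (i,j) = A' $$ (j,i)"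
  proof -
    fix i j assume "i < Suc n" "j < Suc n"
    hence "A'\<^sup>T $$ (i,j) = A' $$ (j,i)" using A' by auto
    thus "A' $$ (i,j) = A' $$ (j,i)" using symA' by simp
  qed
  define A3 where "A3 = mat n n (\<lambda>(i,j). A' $$ (Suc i, Suc j))"
  have A3: "A3 \<in> carrier_mat n n" unfolding A3_def by simp
  have symA3: "A3\<^sup>T = A3" unfolding A3_def by (rule eq_matI, auto simp: symA'')
  from Suc.IH[OF A3 symA3] obtain U3 es3 where U3: "U3 \<in> carrier_mat n n" 
    and UU3: "U3\<^sup>T * U3 = 1\<^sub>m n" and les3: "length es3 = n"
    and D3: "U3\<^sup>T * A3 * U3 = mat n n (\<lambda>(i,j). if i = j then es3 ! i else 0)" by blast
  have A'blk: "A' = four_block_mat (mat 1 1 (\<lambda>_. e)) (0\<^sub>m 1 n) (0\<^sub>m n 1) A3"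
  proof (rule eq_matI)
    fix i j assume i: "i < dim_row (four_block_mat (mat 1 1 (\<lambda>_. e)) (0\<^sub>m 1 n) (0\<^sub>m n 1) A3)"
      and j: "j < dim_col (four_block_mat (mat 1 1 (\<lambda>_. e)) (0\<^sub>m 1 n) (0\<^sub>m n 1) A3)"
    hence i: "i < Suc n" and j: "j < Suc n" using A3 by auto
    show "A' $$ (i,j) = four_block_mat (mat 1 1 (\<lambda>_. e)) (0\<^sub>m 1 n) (0\<^sub>m n 1) A3 $$ (i,j)"
    proof (cases "j = 0")
      case True thus ?thesis using c0[OF i] i A3 by auto
    next
      case False note j0 = this
      show ?thesis
      proof (cases "i = 0")
        case True thus ?thesis using c0[OF j] j j0 A3 symA''[OF i j] by auto
      next
        case False
        then obtain i' j' where "i = Suc i'" "j = Suc j'" using j0 by (cases i; cases j) auto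
        thus ?thesis using i j A3 unfolding A3_def by auto
      qed
    qed
  qed (insert A' A3, auto)
  define B where "B = four_block_mat (1\<^sub>m 1) (0\<^sub>m 1 n) (0\<^sub>m n 1) U3"
  have B: "B \<in> carrier_mat (Suc n) (Suc n)" unfolding B_def using U3 by auto
  have BT: "B\<^sup>T = four_block_mat (1\<^sub>m 1) (0\<^sub>m 1 n) (0\<^sub>m n 1) U3\<^sup>T"
    unfolding B_def using transpose_four_block_mat[of "1\<^sub>m 1" 1 1 "0\<^sub>m 1 n" n "0\<^sub>m n 1" n U3] U3
    by simp
  have U3T: "U3\<^sup>T \<in> carrier_mat n n" using U3 by simp
  define U where "U = W * B"
  have U: "U \<in> carrier_mat (Suc n) (Suc n)" unfolding U_def using W B by auto
  have UT: "U\<^sup>T = B\<^sup>T * W\<^sup>T" unfolding U_def using W B by (simp add: transpose_mult)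
  have "U\<^sup>T * U = (B\<^sup>T * W\<^sup>T) * (W * B)" using UT U_def by simp
  also have "\<dots> = B\<^sup>T * (W\<^sup>T * W) * B" using assoc4[of "B\<^sup>T" "Suc n" "W\<^sup>T" W B] W B by simp
  also have "\<dots> = B\<^sup>T * B" unfolding WW using B by simp
  also have "\<dots> = four_block_mat (1\<^sub>m 1) (0\<^sub>m 1 n) (0\<^sub>m n 1) U3\<^sup>T * four_block_mat (1\<^sub>m 1) (0\<^sub>m 1 n) (0\<^sub>m n 1) U3"
    by (subst BT) (simp add: B_def)
  also have "\<dots> = 1\<^sub>m (Suc n)"
    apply (subst mult_four_block_mat[OF one_carrier_mat zero_carrier_mat zero_carrier_mat U3T
      one_carrier_mat zero_carrier_mat zero_carrier_mat U3])
    using U3 UU3 four_block_one_mat[of 1 n] by simp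
  finally have UU: "U\<^sup>T * U = 1\<^sub>m (Suc n)" .
  have "U\<^sup>T * A * U = (B\<^sup>T * W\<^sup>T) * A * (W * B)" using UT U_def by simp
  also have "\<dots> = B\<^sup>T * (W\<^sup>T * A) * (W * B)" 
    using assoc_mult_mat[of "B\<^sup>T" "Suc n" "Suc n" "W\<^sup>T" "Suc n" A "Suc n"] W B A by simp
  also have "\<dots> = B\<^sup>T * A' * B" unfolding A'_def
    using assoc4[of "B\<^sup>T" "Suc n" "W\<^sup>T * A" W B] W B A by simp
  also have "\<dots> = four_block_mat (mat 1 1 (\<lambda>_. e)) (0\<^sub>m 1 n) (0\<^sub>m n 1) (U3\<^sup>T * A3 * U3)"
    unfolding A'blk apply (subst BT) unfolding B_def
    apply (subst mult_four_block_mat[OF one_carrier_mat zero_carrier_mat zero_carrier_mat U3T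
      _ zero_carrier_mat zero_carrier_mat A3])
     apply simp
    apply (subst mult_four_block_mat[OF _ _ _ _ one_carrier_mat zero_carrier_mat zero_carrier_mat U3])
    using U3 A3 by auto
  also have "\<dots> = mat (Suc n) (Suc n) (\<lambda>(i,j). if i = j then (e # es3) ! i else 0)"
    unfolding D3 by (rule eq_matI, auto)
  finally show ?case using U UU les3 by (intro exI[of _ U] exI[of _ "e # es3"]) auto
qed


definition diagm :: "nat \<Rightarrow> real list \<Rightarrow> real mat" where
  "diagm n es = mat n n (\<lambda>(i,j). if i = j then es ! i else 0)"

lemma diagm_carrier[simp]: "diagm n es \<in> carrier_mat n n" unfolding diagm_def by simp

lemma proots_linear_prod: "proots (\<Prod>a\<leftarrow>es. [:- a, 1:]) = mset (es :: real list)"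
proof (induction es)
  case Nil thus ?case by simp
next
  case (Cons a es)
  define P where "P = (\<Prod>a\<leftarrow>es. [:- a, 1:])"
  have e: "(\<Prod>a\<leftarrow>a # es. [:- a, 1:]) = [:- a, 1:] * P" unfolding P_def by simp
  have P0: "P \<noteq> 0" unfolding P_def by (auto simp: prod_list_zero_iff)
  have "proots ([:- a, 1:] * P) = proots [:- a, 1:] + proots P"
    by (rule proots_mult) (use P0 in auto)
  also have "proots [:- a, 1:] = {#a#}" using proots_linear_factor[of "-a"] by simp
  also have "proots P = mset es" using Cons unfolding P_def .
  finally show ?case unfolding e by simp
qed

lemma spectral_full:
  fixes A :: "real mat"
  assumes A: "A \<in> carrier_mat n n" and sym: "A\<^sup>T = A"
  shows "\<exists>U es. U \<in> carrier_mat n n \<and> U\<^sup>T * U = 1\<^sub>m n \<and> U * U\<^sup>T = 1\<^sub>m n \<and> length es = n \<and>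
    A = U * diagm n es * U\<^sup>T \<and> mset es = proots (char_poly A)"
proof -
  from spectral_real_sym[OF A sym] obtain U es where U: "U \<in> carrier_mat n n"
    and UU: "U\<^sup>T * U = 1\<^sub>m n" and les: "length es = n"
    and D: "U\<^sup>T * A * U = diagm n es" unfolding diagm_def by blast
  have UT: "U\<^sup>T \<in> carrier_mat n n" using U by simp
  have UU': "U * U\<^sup>T = 1\<^sub>m n" by (rule mat_mult_left_right_inverse[OF UT U UU])
  have "U * diagm n es * U\<^sup>T = U * (U\<^sup>T * A * U) * U\<^sup>T" unfolding D ..
  also have "U\<^sup>T * A * U = U\<^sup>T * (A * U)" using UT A U by (simp add: assoc_mult_mat[of _ n n])
  also have "U * (U\<^sup>T * (A * U)) = (U * U\<^sup>T) * (A * U)"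
    by (rule assoc_mult_mat[of U n n "U\<^sup>T" n "A * U" n, symmetric]) (use U A in auto)
  also have "\<dots> = A * U" unfolding UU' using A U by simp
  also have "A * U * U\<^sup>T = A * (U * U\<^sup>T)" using A U by (simp add: assoc_mult_mat[of _ n n])
  also have "\<dots> = A" unfolding UU' using A by simp
  finally have AD: "A = U * diagm n es * U\<^sup>T" by simp
  have "similar_mat_wit A (diagm n es) U U\<^sup>T" unfolding similar_mat_wit_def Let_def
    using A U UT UU UU' AD by auto
  hence "similar_mat A (diagm n es)" unfolding similar_mat_def by blast
  hence "char_poly A = char_poly (diagm n es)" by (rule char_poly_similar)
  also have "\<dots> = (\<Prod>a\<leftarrow>diag_mat (diagm n es). [:- a, 1:])"
    by (rule char_poly_upper_triangular[of _ n]) (auto simp: diagm_def upper_triangular_def)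
  also have "diag_mat (diagm n es) = es"
    by (rule nth_equalityI) (auto simp: diag_mat_def diagm_def les)
  finally have "proots (char_poly A) = mset es" by (simp add: proots_linear_prod)
  thus ?thesis using U UU UU' les AD by metis
qed

lemma quad_expansion:
  fixes A U :: "real mat"
  assumes U: "U \<in> carrier_mat n n" and AD: "A = U * diagm n es * U\<^sup>T" and z: "z \<in> carrier_vec n"
  shows "z \<bullet> (A *\<^sub>v z) = (\<Sum>j<n. es ! j * (col U j \<bullet> z)^2)"
proof -
  have UT: "U\<^sup>T \<in> carrier_mat n n" using U by simp
  define w where "w = U\<^sup>T *\<^sub>v z"
  have w: "w \<in> carrier_vec n" unfolding w_def using U z by simp
  have wj: "\<And>j. j < n \<Longrightarrow> w $ j = col U j \<bullet> z" unfolding w_def using U z by simp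
  have "A *\<^sub>v z = U *\<^sub>v (diagm n es *\<^sub>v w)" unfolding AD w_def using U z
    by (simp add: assoc_mult_mat_vec[of _ n n _ n])
  moreover have "z \<bullet> (U *\<^sub>v (diagm n es *\<^sub>v w)) = w \<bullet> (diagm n es *\<^sub>v w)"
  proof -
    have q: "diagm n es *\<^sub>v w \<in> carrier_vec n" using mult_mat_vec_carrier[OF diagm_carrier w] .
    show ?thesis unfolding w_def using transpose_vec_mult_scalar[OF U q[unfolded w_def] z] by simp
  qed
  ultimately have "z \<bullet> (A *\<^sub>v z) = w \<bullet> (diagm n es *\<^sub>v w)" by simp
  also have "diagm n es *\<^sub>v w = vec n (\<lambda>j. es ! j * w $ j)"
  proof (rule eq_vecI)
    fix j assume "j < dim_vec (vec n (\<lambda>j. es ! j * w $ j))"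
    hence j: "j < n" by simp
    have "(diagm n es *\<^sub>v w) $ j = (\<Sum>k \<in> {0..<n}. (if j = k then es ! j else 0) * w $ k)"
      using j w unfolding diagm_def by (simp add: scalar_prod_def)
    also have "\<dots> = (\<Sum>k \<in> {0..<n}. (if j = k then es ! j * w $ k else 0))"
      by (rule sum.cong) auto
    also have "\<dots> = es ! j * w $ j" using j by (simp add: sum.delta)
    finally show "(diagm n es *\<^sub>v w) $ j = vec n (\<lambda>j. es ! j * w $ j) $ j" using j by simp
  qed (simp add: diagm_def)
  also have "w \<bullet> vec n (\<lambda>j. es ! j * w $ j) = (\<Sum>j<n. w $ j * (es ! j * w $ j))"
    using w by (simp add: scalar_prod_def lessThan_atLeast0)
  also have "\<dots> = (\<Sum>j<n. es ! j * (col U j \<bullet> z)^2)"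
    by (rule sum.cong, simp, simp add: wj power2_eq_square)
  finally show ?thesis .
qed

lemma norm_expansion:
  fixes U :: "real mat"
  assumes U: "U \<in> carrier_mat n n" and UU: "U * U\<^sup>T = 1\<^sub>m n" and z: "z \<in> carrier_vec n"
  shows "z \<bullet> z = (\<Sum>j<n. (col U j \<bullet> z)^2)"
proof -
  have "z = U * diagm n (replicate n 1) * U\<^sup>T *\<^sub>v z"
  proof -
    have "U * diagm n (replicate n 1) = U" unfolding diagm_def
      by (subst right_mult_one_mat[OF U, symmetric]) (rule arg_cong[of _ _ "\<lambda>x. U * x"], rule eq_matI, auto)
    thus ?thesis using UU z by simp
  qed
  hence "z \<bullet> z = z \<bullet> ((U * diagm n (replicate n 1) * U\<^sup>T) *\<^sub>v z)" by simp
  also have "\<dots> = (\<Sum>j<n. replicate n 1 ! j * (col U j \<bullet> z)^2)"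
    by (rule quad_expansion[OF U refl z])
  finally show ?thesis by simp
qed


lemma card_filter_eq:
  fixes xs :: "real list"
  shows "card {j. j < length xs \<and> P (xs ! j)} = length (filter P (rev (sort xs)))"
proof -
  have "card {j. j < length xs \<and> P (xs ! j)} = length (filter P xs)"
    by (simp add: length_filter_conv_card)
  also have "\<dots> = length (filter P (rev (sort xs)))"
    by (metis mset_filter mset_rev mset_sort size_mset)
  finally show ?thesis .
qed

lemma rev_sort_mono:
  fixes xs :: "real list"
  assumes "p \<le> q" "q < length xs"
  shows "rev (sort xs) ! q \<le> rev (sort xs) ! p"
proof -
  have s: "sorted (sort xs)" by simp
  have "rev (sort xs) ! q = sort xs ! (length xs - Suc q)" using assms by (simp add: rev_nth)
  moreover have "rev (sort xs) ! p = sort xs ! (length xs - Suc p)" using assms by (simp add: rev_nth)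
  moreover have "sort xs ! (length xs - Suc q) \<le> sort xs ! (length xs - Suc p)"
    by (rule sorted_nth_mono[OF s]) (use assms in auto)
  ultimately show ?thesis by simp
qed

lemma count_ge_sorted:
  fixes xs :: "real list"
  assumes i1: "1 \<le> i" and il: "i \<le> length xs"
  shows "i \<le> card {j. j < length xs \<and> rev (sort xs) ! (i-1) \<le> xs ! j}"
proof -
  define ys where "ys = rev (sort xs)"
  have ly: "length ys = length xs" unfolding ys_def by simp
  let ?P = "\<lambda>x. ys ! (i-1) \<le> x"
  have "filter ?P (take i ys) = take i ys"
  proof (rule filter_True, intro ballI)
    fix x assume "x \<in> set (take i ys)"
    then obtain q where q: "q < length (take i ys)" "x = take i ys ! q" by (metis in_set_conv_nth)
    hence "q < i" "q < length ys" by auto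
    hence "ys ! q \<ge> ys ! (i-1)" unfolding ys_def using rev_sort_mono[of q "i-1" xs] il ly i1
      by (simp add: ys_def)
    thus "?P x" using q by simp
  qed
  hence eqi: "length (filter ?P (take i ys)) = i" using il ly by simp
  have le: "length (filter ?P (take i ys)) \<le> length (filter ?P ys)"
  proof -
    have "ys = take i ys @ drop i ys" by simp
    hence "length (filter ?P ys) = length (filter ?P (take i ys)) + length (filter ?P (drop i ys))"
      by (metis filter_append length_append)
    thus ?thesis by simp
  qed
  have "card {j. j < length xs \<and> ?P (xs ! j)} = length (filter ?P ys)"
    using card_filter_eq[of xs ?P] unfolding ys_def .
  thus ?thesis using eqi le unfolding ys_def by simp
qed

lemma sorted_desc_ge:
  fixes xs :: "real list"
  assumes i1: "1 \<le> i" and ic: "i \<le> card {j. j < length xs \<and> c \<le> xs ! j}"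
  shows "i \<le> length xs \<and> c \<le> rev (sort xs) ! (i - 1)"
proof -
  have "card {j. j < length xs \<and> c \<le> xs ! j} \<le> card {..<length xs}"
    by (rule card_mono) auto
  hence il: "i \<le> length xs" using ic by simp
  define ys where "ys = rev (sort xs)"
  have ly: "length ys = length xs" unfolding ys_def by simp
  let ?P = "\<lambda>x. c \<le> x"
  have cnt: "i \<le> length (filter ?P ys)" using ic card_filter_eq[of xs ?P] unfolding ys_def by simp
  have "c \<le> ys ! (i - 1)"
  proof (rule ccontr)
    assume "\<not> c \<le> ys ! (i - 1)"
    hence lt: "ys ! (i-1) < c" by simp
    have "filter ?P (drop (i-1) ys) = []"
    proof (rule filter_False, intro ballI)
      fix x assume "x \<in> set (drop (i-1) ys)"
      then obtain q where q: "q < length (drop (i-1) ys)" "x = drop (i-1) ys ! q" by (metis in_set_conv_nth)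
      hence "x = ys ! (i - 1 + q)" "i - 1 + q < length ys" by auto
      hence "x \<le> ys ! (i-1)" unfolding ys_def using rev_sort_mono[of "i-1" "i-1+q" xs] ly
        by (simp add: ys_def)
      thus "\<not> ?P x" using lt by simp
    qed
    moreover have "ys = take (i-1) ys @ drop (i-1) ys" by simp
    ultimately have "length (filter ?P ys) = length (filter ?P (take (i-1) ys))"
      by (metis append_Nil2 filter_append)
    also have "\<dots> \<le> length (take (i-1) ys)" by (rule length_filter_le)
    also have "\<dots> \<le> i - 1" by simp
    finally show False using cnt i1 by simp
  qed
  thus ?thesis using il unfolding ys_def by simp
qed


lemma abel_arith:
  fixes K u v :: real
  assumes K: "K \<ge> 0" and v: "0 < v" and vu: "v \<le> u"
  shows "(u - v) * (K / u^2) + K / u \<le> K / v"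
proof -
  have u: "u > 0" using v vu by simp
  have "0 \<le> (u-v)^2" by simp
  hence e: "(2*u - v) * v \<le> u^2" by (simp add: power2_eq_square algebra_simps)
  have "(2*u - v)/u^2 = ((2*u-v)*v)/(u^2*v)" using v by simp
  also have "\<dots> \<le> u^2/(u^2*v)" by (rule divide_right_mono[OF e]) (use u v in simp)
  also have "\<dots> = 1/v" using u by simp
  finally have f: "(2*u - v)/u^2 \<le> 1/v" .
  have "K / u = K * u / u^2" using u by (simp add: power2_eq_square)
  hence "(u - v) * (K / u^2) + K / u = ((u - v) * K + K * u) / u^2" by (simp add: add_divide_distrib)
  also have "\<dots> = K * ((2*u - v)/u^2)" by (simp add: algebra_simps)
  also have "\<dots> \<le> K * (1/v)" by (rule mult_left_mono[OF f K])
  finally show ?thesis by simp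
qed

lemma abel_gen:
  fixes a p :: "nat \<Rightarrow> real" and K L :: real
  assumes L: "L > 0" and K: "K \<ge> 0"
  shows "finite J \<Longrightarrow> (\<forall>j\<in>J. p j \<ge> 0) \<Longrightarrow> 
    (\<forall>t>0. (\<Sum>j\<in>{j\<in>J. a j \<ge> t}. p j) \<le> K / (t + 10*L)^2) \<Longrightarrow>
    0 \<le> b \<Longrightarrow> (\<forall>j\<in>J. a j > b) \<Longrightarrow> (\<Sum>j\<in>J. (a j - b) * p j) \<le> K / (b + 10*L)"
proof (induction "card J" arbitrary: J b rule: less_induct)
  case less
  note fin = less.prems(1) and pnn = less.prems(2) and hyp = less.prems(3)
    and b0 = less.prems(4) and ab = less.prems(5)
  show ?case
  proof (cases "J = {}")
    case True thus ?thesis using K L b0 by simp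
  next
    case False
    define a0 where "a0 = Min (a ` J)"
    have a0mem: "a0 \<in> a ` J" unfolding a0_def using fin False by simp
    then obtain j0 where j0: "j0 \<in> J" "a j0 = a0" by auto
    have a0le: "\<And>j. j \<in> J \<Longrightarrow> a0 \<le> a j" unfolding a0_def using fin by simp
    have a0b: "a0 > b" using ab j0 by auto
    define J' where "J' = {j\<in>J. a j > a0}"
    have J'sub: "J' \<subseteq> J" unfolding J'_def by auto
    have finJ': "finite J'" using fin J'sub finite_subset by blast
    have cardJ': "card J' < card J"
    proof (rule psubset_card_mono[OF fin])
      have "j0 \<notin> J'" using j0 unfolding J'_def by simp
      thus "J' \<subset> J" using J'sub j0 by blast
    qed
    have hyp': "\<forall>t>0. (\<Sum>j\<in>{j\<in>J'. a j \<ge> t}. p j) \<le> K / (t + 10*L)^2"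
    proof (intro allI impI)
      fix t :: real assume t: "t > 0"
      have "(\<Sum>j\<in>{j\<in>J'. a j \<ge> t}. p j) \<le> (\<Sum>j\<in>{j\<in>J. a j \<ge> t}. p j)"
        by (rule sum_mono2) (use fin J'sub pnn in auto)
      also have "\<dots> \<le> K / (t + 10*L)^2" using hyp t by auto
      finally show "(\<Sum>j\<in>{j\<in>J'. a j \<ge> t}. p j) \<le> K / (t + 10*L)^2" .
    qed
    have pJ': "\<forall>j\<in>J'. p j \<ge> 0" using pnn J'sub by auto
    have a00: "0 \<le> a0" using a0b b0 by simp
    have aJ': "\<forall>j\<in>J'. a j > a0" unfolding J'_def by simp
    have IH: "(\<Sum>j\<in>J'. (a j - a0) * p j) \<le> K / (a0 + 10*L)"
      by (rule less.hyps[OF cardJ' finJ' pJ' hyp' a00 aJ'])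
    have "(\<Sum>j\<in>J. (a j - b) * p j) = (\<Sum>j\<in>J. (a0 - b) * p j + (a j - a0) * p j)"
      by (rule sum.cong) (auto simp: algebra_simps)
    also have "\<dots> = (\<Sum>j\<in>J. (a0 - b) * p j) + (\<Sum>j\<in>J. (a j - a0) * p j)"
      by (rule sum.distrib)
    also have "(\<Sum>j\<in>J. (a0 - b) * p j) = (a0 - b) * (\<Sum>j\<in>J. p j)"
      by (rule sum_distrib_left[symmetric])
    finally have s1: "(\<Sum>j\<in>J. (a j - b) * p j) = (a0 - b) * (\<Sum>j\<in>J. p j) + (\<Sum>j\<in>J. (a j - a0) * p j)" .
    have s2: "(\<Sum>j\<in>J. (a j - a0) * p j) = (\<Sum>j\<in>J'. (a j - a0) * p j)"
    proof (rule sum.mono_neutral_right[OF fin J'sub], intro ballI)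
      fix j assume "j \<in> J - J'"
      hence "a j = a0" using a0le unfolding J'_def by force
      thus "(a j - a0) * p j = 0" by simp
    qed
    have s3: "(\<Sum>j\<in>J. p j) \<le> K / (a0 + 10*L)^2"
    proof -
      have "{j\<in>J. a j \<ge> a0} = J" using a0le by auto
      moreover have "(\<Sum>j\<in>{j\<in>J. a j \<ge> a0}. p j) \<le> K / (a0 + 10*L)^2" using hyp a0b b0 by simp
      ultimately show ?thesis by simp
    qed
    have "(\<Sum>j\<in>J. (a j - b) * p j) \<le> (a0 - b) * (K / (a0 + 10*L)^2) + K / (a0 + 10*L)"
      unfolding s1 s2 using IH s3 a0b by (intro add_mono mult_left_mono) auto
    also have "\<dots> = ((a0 + 10*L) - (b + 10*L)) * (K / (a0 + 10*L)^2) + K / (a0 + 10*L)" by simp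
    also have "\<dots> \<le> K / (b + 10*L)"
      by (rule abel_arith) (use K L b0 a0b in auto)
    finally show ?thesis .
  qed
qed

lemma abel_sum:
  fixes a p :: "nat \<Rightarrow> real" and K L :: real
  assumes "L > 0" "K \<ge> 0" "finite J" "\<forall>j\<in>J. p j \<ge> 0" "\<forall>j\<in>J. a j > 0"
    "\<forall>t>0. (\<Sum>j\<in>{j\<in>J. a j \<ge> t}. p j) \<le> K / (t + 10*L)^2"
  shows "(\<Sum>j\<in>J. a j * p j) \<le> K / (10*L)"
  using abel_gen[OF assms(1,2,3,4,6), of 0] assms(5) by simp


lemma pol_arith:
  fixes a b c X p W \<delta> s :: real
  assumes d: "\<delta> > 0" and ds: "\<delta> * s = 1"
    and h1: "a + 2 * s * b + s^2 * c \<le> \<delta> * (X + 2 * s * p + s^2 * W)"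
    and h2: "- (a - 2 * s * b + s^2 * c) \<le> \<delta> * (X - 2 * s * p + s^2 * W)"
    and bW: "b = W"
  shows "W \<le> \<delta>^2 * X"
proof -
  have e: "\<delta> * (X + 2 * s * p + s^2 * W) + \<delta> * (X - 2 * s * p + s^2 * W) = 2 * \<delta> * X + 2 * (\<delta> * s) * s * W"
    by (simp add: algebra_simps power2_eq_square)
  have "4 * s * W \<le> 2 * \<delta> * X + 2 * (\<delta> * s) * s * W" using h1 h2 e unfolding bW by linarith
  hence "s * W \<le> \<delta> * X" unfolding ds by (simp add: mult.commute)
  hence "\<delta> * (s * W) \<le> \<delta> * (\<delta> * X)" using d by (intro mult_left_mono) auto
  hence "(\<delta> * s) * W \<le> \<delta> * (\<delta> * X)" by (simp add: mult.assoc)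
  thus ?thesis unfolding ds by (simp add: power2_eq_square)
qed


lemma kernel_exists:
  fixes R :: "real vec set"
  assumes fin: "finite R" and Rc: "R \<subseteq> carrier_vec n" and cardR: "card R < n"
  shows "\<exists>g \<in> carrier_vec n. g \<noteq> 0\<^sub>v n \<and> (\<forall>r\<in>R. r \<bullet> g = 0)"
proof -
  obtain rs where rs: "set rs = R" "distinct rs" using finite_distinct_list[OF fin] by blast
  have lrs: "length rs < n" using cardR rs distinct_card by metis
  define c where "c = (\<lambda>i. if i < length rs then rs ! i else 0\<^sub>v n)"
  have cc: "c \<in> {0..<n} \<rightarrow> carrier_vec n"
  proof
    fix i assume "i \<in> {0..<n}"
    show "c i \<in> carrier_vec n"
    proof (cases "i < length rs")
      case True
      hence "rs ! i \<in> R" using rs(1) nth_mem by blast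
      thus ?thesis using True Rc unfolding c_def by auto
    qed (simp add: c_def)
  qed
  define C where "C = mat\<^sub>r n n (\<lambda>i. if i = n - 1 then 0\<^sub>v n else c i)"
  have C: "C \<in> carrier_mat n n" unfolding C_def by simp
  have "det C = 0" unfolding C_def by (rule det_row_0[OF _ cc]) (use lrs in simp)
  then obtain g where g: "g \<in> carrier_vec n" "g \<noteq> 0\<^sub>v n" "C *\<^sub>v g = 0\<^sub>v n"
    using det_0_iff_vec_prod_zero[OF C] by blast
  have "\<forall>r\<in>R. r \<bullet> g = 0"
  proof
    fix r assume "r \<in> R"
    then obtain i where i: "i < length rs" "r = rs ! i" using rs by (metis in_set_conv_nth)
    have ci: "c i = r" unfolding c_def using i by simp
    have rc: "r \<in> carrier_vec n" using \<open>r \<in> R\<close> Rc by auto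
    have "(C *\<^sub>v g) $ i = row C i \<bullet> g" using i lrs C by simp
    also have "row C i = r"
    proof -
      have ni: "i \<noteq> n - 1" "i < n" using i lrs by auto
      have "row C i = (if i = n - 1 then 0\<^sub>v n else c i)" unfolding C_def
      proof (rule row_mat_of_row_fun)
        have "c i \<in> carrier_vec n" using cc ni by auto
        thus "dim_vec (if i = n - 1 then 0\<^sub>v n else c i) = n" by auto
      qed (use ni in auto)
      thus ?thesis using ni ci by simp
    qed
    finally show "r \<bullet> g = 0" using g(3) i lrs by simp
  qed
  thus ?thesis using g by blast
qed

lemma sq_expand:
  fixes u v :: "real vec"
  assumes u: "u \<in> carrier_vec m" and v: "v \<in> carrier_vec m"
  shows "(u + s \<cdot>\<^sub>v v) \<bullet> (u + s \<cdot>\<^sub>v v) = u \<bullet> u + 2 * s * (u \<bullet> v) + s^2 * (v \<bullet> v)"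
proof -
  have sv: "s \<cdot>\<^sub>v v \<in> carrier_vec m" using v by simp
  have "(u + s \<cdot>\<^sub>v v) \<bullet> (u + s \<cdot>\<^sub>v v) = u \<bullet> (u + s \<cdot>\<^sub>v v) + (s \<cdot>\<^sub>v v) \<bullet> (u + s \<cdot>\<^sub>v v)"
    by (rule add_scalar_prod_distrib[OF u sv]) (use u sv in simp)
  also have "u \<bullet> (u + s \<cdot>\<^sub>v v) = u \<bullet> u + u \<bullet> (s \<cdot>\<^sub>v v)"
    by (rule scalar_prod_add_distrib[OF u u sv])
  also have "(s \<cdot>\<^sub>v v) \<bullet> (u + s \<cdot>\<^sub>v v) = (s \<cdot>\<^sub>v v) \<bullet> u + (s \<cdot>\<^sub>v v) \<bullet> (s \<cdot>\<^sub>v v)"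
    by (rule scalar_prod_add_distrib[OF sv u sv])
  also have "u \<bullet> (s \<cdot>\<^sub>v v) = s * (u \<bullet> v)" using u v by simp
  also have "(s \<cdot>\<^sub>v v) \<bullet> u = s * (u \<bullet> v)" using u v by (simp add: comm_scalar_prod[OF v u])
  also have "(s \<cdot>\<^sub>v v) \<bullet> (s \<cdot>\<^sub>v v) = s^2 * (v \<bullet> v)" using v by (simp add: power2_eq_square)
  finally show ?thesis by simp
qed

lemma pol_arith2:
  fixes SXX SXW SWW X p W \<delta> s :: real
  assumes d: "\<delta> > 0" and ds: "\<delta> * s = 1"
   and up: "SXX + 2*s*SXW + s^2*SWW \<le> (1+\<delta>)*(X + 2*s*p + s^2*W)"
   and lo: "(1-\<delta>)*(X + 2*(-s)*p + (-s)^2*W) \<le> SXX + 2*(-s)*SXW + (-s)^2*SWW"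
   and B: "SXW - p = W"
  shows "W \<le> \<delta>^2*X"
proof (rule pol_arith[OF d ds, of "SXX - X" "SXW - p" "SWW - W" X p W])
  have e1: "SXX - X + 2*s*(SXW - p) + s^2*(SWW - W) = (SXX + 2*s*SXW + s^2*SWW) - (X + 2*s*p + s^2*W)"
    by (simp add: algebra_simps)
  have e2: "(1+\<delta>)*(X + 2*s*p + s^2*W) = (X + 2*s*p + s^2*W) + \<delta>*(X + 2*s*p + s^2*W)"
    by (simp add: algebra_simps)
  show "SXX - X + 2*s*(SXW - p) + s^2*(SWW - W) \<le> \<delta>*(X + 2*s*p + s^2*W)"
    using up e1 e2 by linarith
  have e3: "- (SXX - X - 2*s*(SXW - p) + s^2*(SWW - W)) = (X - 2*s*p + s^2*W) - (SXX - 2*s*SXW + s^2*SWW)"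
    by (simp add: algebra_simps)
  have e4: "(1-\<delta>)*(X + 2*(-s)*p + (-s)^2*W) = (X - 2*s*p + s^2*W) - \<delta>*(X - 2*s*p + s^2*W)"
    by (simp add: algebra_simps)
  have e5: "SXX + 2*(-s)*SXW + (-s)^2*SWW = SXX - 2*s*SXW + s^2*SWW" by simp
  show "- (SXX - X - 2*s*(SXW - p) + s^2*(SWW - W)) \<le> \<delta>*(X - 2*s*p + s^2*W)"
    using lo e3 e4 e5 by linarith
  show "SXW - p = W" by (rule B)
qed

lemma pol_vec:
  fixes S :: "real mat"
  assumes S: "S \<in> carrier_mat k n" and x: "x \<in> carrier_vec n" and w: "w \<in> carrier_vec n"
    and d: "\<delta> > 0"
    and H: "\<And>s. (1 - \<delta>) * ((x + s \<cdot>\<^sub>v w) \<bullet> (x + s \<cdot>\<^sub>v w)) \<le> (S *\<^sub>v (x + s \<cdot>\<^sub>v w)) \<bullet> (S *\<^sub>v (x + s \<cdot>\<^sub>v w)) \<and>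
       (S *\<^sub>v (x + s \<cdot>\<^sub>v w)) \<bullet> (S *\<^sub>v (x + s \<cdot>\<^sub>v w)) \<le> (1 + \<delta>) * ((x + s \<cdot>\<^sub>v w) \<bullet> (x + s \<cdot>\<^sub>v w))"
    and B: "(S *\<^sub>v x) \<bullet> (S *\<^sub>v w) - x \<bullet> w = w \<bullet> w"
  shows "w \<bullet> w \<le> \<delta>^2 * (x \<bullet> x)"
proof -
  have Sx: "S *\<^sub>v x \<in> carrier_vec k" and Sw: "S *\<^sub>v w \<in> carrier_vec k" using S x w by auto
  have ex: "\<And>s. S *\<^sub>v (x + s \<cdot>\<^sub>v w) = S *\<^sub>v x + s \<cdot>\<^sub>v (S *\<^sub>v w)"
    using S x w by (simp add: mult_add_distrib_mat_vec mult_mat_vec)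
  have q1: "\<And>s. (S *\<^sub>v (x + s \<cdot>\<^sub>v w)) \<bullet> (S *\<^sub>v (x + s \<cdot>\<^sub>v w)) = 
     (S *\<^sub>v x) \<bullet> (S *\<^sub>v x) + 2 * s * ((S *\<^sub>v x) \<bullet> (S *\<^sub>v w)) + s^2 * ((S *\<^sub>v w) \<bullet> (S *\<^sub>v w))"
    unfolding ex by (rule sq_expand[OF Sx Sw])
  have q2: "\<And>s. (x + s \<cdot>\<^sub>v w) \<bullet> (x + s \<cdot>\<^sub>v w) = x \<bullet> x + 2 * s * (x \<bullet> w) + s^2 * (w \<bullet> w)"
    by (rule sq_expand[OF x w])
  define s where "s = 1 / \<delta>"
  have ds: "\<delta> * s = 1" unfolding s_def using d by simp
  show ?thesis
  proof (rule pol_arith2[OF d ds])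
    show "(S *\<^sub>v x) \<bullet> (S *\<^sub>v x) + 2 * s * ((S *\<^sub>v x) \<bullet> (S *\<^sub>v w)) + s^2 * ((S *\<^sub>v w) \<bullet> (S *\<^sub>v w))
       \<le> (1 + \<delta>) * (x \<bullet> x + 2 * s * (x \<bullet> w) + s^2 * (w \<bullet> w))"
      using H[of s] unfolding q1 q2 by simp
    show "(1 - \<delta>) * (x \<bullet> x + 2 * (-s) * (x \<bullet> w) + (-s)^2 * (w \<bullet> w)) \<le> 
      (S *\<^sub>v x) \<bullet> (S *\<^sub>v x) + 2 * (-s) * ((S *\<^sub>v x) \<bullet> (S *\<^sub>v w)) + (-s)^2 * ((S *\<^sub>v w) \<bullet> (S *\<^sub>v w))"
      using H[of "-s"] unfolding q1 q2 by simp
    show "(S *\<^sub>v x) \<bullet> (S *\<^sub>v w) - x \<bullet> w = w \<bullet> w" by (rule B)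
  qed
qed


lemma dot_mat_vec:
  fixes U :: "real mat"
  assumes U: "U \<in> carrier_mat m n" and q: "q \<in> carrier_vec m" and h: "h \<in> carrier_vec n"
  shows "q \<bullet> (U *\<^sub>v h) = (\<Sum>j<n. h $ j * (col U j \<bullet> q))"
proof -
  have "q \<bullet> (U *\<^sub>v h) = (U\<^sup>T *\<^sub>v q) \<bullet> h" using transpose_vec_mult_scalar[OF U h q] by simp
  also have "\<dots> = (\<Sum>j<n. (U\<^sup>T *\<^sub>v q) $ j * h $ j)" using h U by (simp add: scalar_prod_def lessThan_atLeast0)
  also have "\<dots> = (\<Sum>j<n. h $ j * (col U j \<bullet> q))"
    by (rule sum.cong) (use U q in auto)
  finally show ?thesis .
qed

lemma orth_coord:
  fixes U :: "real mat"
  assumes U: "U \<in> carrier_mat n n" and UU: "U\<^sup>T * U = 1\<^sub>m n" and g: "g \<in> carrier_vec n" and j: "j < n"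
  shows "col U j \<bullet> (U *\<^sub>v g) = g $ j"
proof -
  have "col U j \<bullet> (U *\<^sub>v g) = (U\<^sup>T *\<^sub>v (U *\<^sub>v g)) $ j" using U g j by simp
  also have "U\<^sup>T *\<^sub>v (U *\<^sub>v g) = (U\<^sup>T * U) *\<^sub>v g" using U g by (simp add: assoc_mult_mat_vec[of _ n n _ n])
  also have "\<dots> = g" unfolding UU using g by simp
  finally show ?thesis .
qed

lemma orth_norm:
  fixes U :: "real mat"
  assumes U: "U \<in> carrier_mat n n" and UU: "U\<^sup>T * U = 1\<^sub>m n" and g: "g \<in> carrier_vec n"
  shows "(U *\<^sub>v g) \<bullet> (U *\<^sub>v g) = g \<bullet> g"
proof -
  have Ug: "U *\<^sub>v g \<in> carrier_vec n" using U g by simp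
  have "(U *\<^sub>v g) \<bullet> (U *\<^sub>v g) = (U\<^sup>T *\<^sub>v (U *\<^sub>v g)) \<bullet> g"
    using transpose_vec_mult_scalar[OF U g Ug] by simp
  also have "U\<^sup>T *\<^sub>v (U *\<^sub>v g) = (U\<^sup>T * U) *\<^sub>v g" using U g by (simp add: assoc_mult_mat_vec[of _ n n _ n])
  also have "\<dots> = g" unfolding UU using g by simp
  finally show ?thesis .
qed

lemma ebil:
  fixes U S :: "real mat"
  assumes U: "U \<in> carrier_mat n n" and S: "S \<in> carrier_mat k n" and x: "x \<in> carrier_vec n"
    and h: "h \<in> carrier_vec n"
  shows "(S *\<^sub>v x) \<bullet> (S *\<^sub>v (U *\<^sub>v h)) - x \<bullet> (U *\<^sub>v h) =
    (\<Sum>j<n. h $ j * ((S *\<^sub>v col U j) \<bullet> (S *\<^sub>v x) - col U j \<bullet> x))"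
proof -
  have SU: "S * U \<in> carrier_mat k n" using S U by simp
  have "S *\<^sub>v (U *\<^sub>v h) = (S * U) *\<^sub>v h" using S U h by (simp add: assoc_mult_mat_vec[of _ k n _ n])
  hence "(S *\<^sub>v x) \<bullet> (S *\<^sub>v (U *\<^sub>v h)) = (\<Sum>j<n. h $ j * (col (S * U) j \<bullet> (S *\<^sub>v x)))"
    using dot_mat_vec[OF SU _ h, of "S *\<^sub>v x"] S x by simp
  also have "\<dots> = (\<Sum>j<n. h $ j * ((S *\<^sub>v col U j) \<bullet> (S *\<^sub>v x)))"
  proof (rule sum.cong[OF refl])
    fix j assume "j \<in> {..<n}"
    hence "col (S * U) j = S *\<^sub>v col U j" using col_mult2[OF S U, of j] by simp
    thus "h $ j * (col (S * U) j \<bullet> (S *\<^sub>v x)) = h $ j * ((S *\<^sub>v col U j) \<bullet> (S *\<^sub>v x))" by simp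
  qed
  finally have 1: "(S *\<^sub>v x) \<bullet> (S *\<^sub>v (U *\<^sub>v h)) = (\<Sum>j<n. h $ j * ((S *\<^sub>v col U j) \<bullet> (S *\<^sub>v x)))" .
  have 2: "x \<bullet> (U *\<^sub>v h) = (\<Sum>j<n. h $ j * (col U j \<bullet> x))" by (rule dot_mat_vec[OF U x h])
  show ?thesis unfolding 1 2 by (simp add: sum_subtractf[symmetric] algebra_simps)
qed

lemma eig_cols:
  fixes A U :: "real mat"
  assumes U: "U \<in> carrier_mat n n" and UU: "U\<^sup>T * U = 1\<^sub>m n" and les: "length es = n"
    and AD: "A = U * diagm n es * U\<^sup>T" and j: "j < n"
  shows "eigenvector A (col U j) (es ! j)"
proof -
  have A: "A \<in> carrier_mat n n" unfolding AD using U by (meson diagm_carrier mult_carrier_mat transpose_carrier_mat)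
  have AU: "A * U = U * diagm n es"
  proof -
    have "A * U = (U * diagm n es) * (U\<^sup>T * U)" unfolding AD
      by (rule assoc_mult_mat[of _ n n _ n _ n]) (use U in auto)
    thus ?thesis unfolding UU using right_mult_one_mat[of "U * diagm n es" n n] U by simp
  qed
  have "A *\<^sub>v col U j = col (A * U) j" using col_mult2[OF A U j] by simp
  also have "\<dots> = col (U * diagm n es) j" unfolding AU ..
  also have "\<dots> = es ! j \<cdot>\<^sub>v col U j"
  proof (rule eq_vecI)
    fix r assume "r < dim_vec (es ! j \<cdot>\<^sub>v col U j)"
    hence r: "r < n" using U by simp
    have "col (U * diagm n es) j $ r = (\<Sum>l \<in> {0..<n}. U $$ (r,l) * (if l = j then es ! l else 0))"
      using r j U by (simp add: diagm_def scalar_prod_def col_def row_def)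
    also have "\<dots> = (\<Sum>l \<in> {0..<n}. if l = j then U $$ (r,l) * es ! j else 0)"
      by (rule sum.cong) auto
    also have "\<dots> = U $$ (r,j) * es ! j" using j by simp
    finally show "col (U * diagm n es) j $ r = (es ! j \<cdot>\<^sub>v col U j) $ r" using r j U by simp
  qed (use U j in simp)
  finally have ev: "A *\<^sub>v col U j = es ! j \<cdot>\<^sub>v col U j" .
  have "col U j \<bullet> col U j = (U\<^sup>T * U) $$ (j,j)" using U j by simp
  hence "col U j \<bullet> col U j = 1" unfolding UU using j by simp
  hence "col U j \<noteq> 0\<^sub>v n" using U j by auto
  thus ?thesis unfolding eigenvector_def using ev U j A by auto
qed

lemma emb:
  fixes A S U :: "real mat"
  assumes A: "A \<in> carrier_mat n n" and S: "S \<in> carrier_mat k n" and U: "U \<in> carrier_mat n n"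
    and eig: "\<And>j. j < n \<Longrightarrow> eigenvector A (col U j) (es ! j)"
    and aL: "assumption_L S A L" and t: "L \<le> t"
    and h: "h \<in> carrier_vec n" and supp: "\<And>j. j < n \<Longrightarrow> h $ j \<noteq> 0 \<Longrightarrow> t \<le> \<bar>es ! j\<bar>"
  shows "(1 - min (L/t) (1/10)) * ((U *\<^sub>v h) \<bullet> (U *\<^sub>v h)) \<le> (S *\<^sub>v (U *\<^sub>v h)) \<bullet> (S *\<^sub>v (U *\<^sub>v h)) \<and>
    (S *\<^sub>v (U *\<^sub>v h)) \<bullet> (S *\<^sub>v (U *\<^sub>v h)) \<le> (1 + min (L/t) (1/10)) * ((U *\<^sub>v h) \<bullet> (U *\<^sub>v h))"
proof (cases "\<exists>j0<n. t \<le> \<bar>es ! j0\<bar>")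
  case False
  hence "h = 0\<^sub>v n" using supp h by (intro eq_vecI) auto
  hence Uh: "U *\<^sub>v h = 0\<^sub>v n" using U by (intro eq_vecI) auto
  have "S *\<^sub>v 0\<^sub>v n = 0\<^sub>v k" using S by (intro eq_vecI) auto
  thus ?thesis unfolding Uh by simp
next
  case True
  then obtain j0 where j0: "j0 < n" "t \<le> \<bar>es ! j0\<bar>" by blast
  define c where "c = (\<lambda>j. if t \<le> \<bar>es ! j\<bar> then h $ j else 0)"
  define v where "v = (\<lambda>j. if t \<le> \<bar>es ! j\<bar> then col U j else col U j0)"
  define mu where "mu = (\<lambda>j. if t \<le> \<bar>es ! j\<bar> then es ! j else es ! j0)"
  have vc: "\<And>j. v j \<in> carrier_vec n" unfolding v_def using U by auto
  have "U *\<^sub>v h = finsum_vec TYPE(real) (dim_row A) (\<lambda>j. c j \<cdot>\<^sub>v v j) {..<n}"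
  proof (rule eq_vecI)
    have cl: "(\<lambda>j. c j \<cdot>\<^sub>v v j) \<in> {..<n} \<rightarrow> carrier_vec n" using vc by auto
    fix r assume "r < dim_vec (finsum_vec TYPE(real) (dim_row A) (\<lambda>j. c j \<cdot>\<^sub>v v j) {..<n})"
    hence r: "r < n" using finsum_vec_closed[OF cl] A by simp
    have "finsum_vec TYPE(real) (dim_row A) (\<lambda>j. c j \<cdot>\<^sub>v v j) {..<n} $ r = (\<Sum>j<n. (c j \<cdot>\<^sub>v v j) $ r)"
      using index_finsum_vec[OF _ r cl] A by simp
    also have "\<dots> = (\<Sum>j<n. U $$ (r,j) * h $ j)"
    proof (rule sum.cong)
      fix j assume j: "j \<in> {..<n}"
      show "(c j \<cdot>\<^sub>v v j) $ r = U $$ (r,j) * h $ j"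
      proof (cases "t \<le> \<bar>es ! j\<bar>")
        case True thus ?thesis unfolding c_def v_def using r j U by simp
      next
        case False
        hence "h $ j = 0" using supp j by auto
        thus ?thesis unfolding c_def v_def using r j U False by simp
      qed
    qed simp
    also have "\<dots> = (U *\<^sub>v h) $ r" using r U h by (simp add: scalar_prod_def lessThan_atLeast0 row_def)
    finally show "(U *\<^sub>v h) $ r = finsum_vec TYPE(real) (dim_row A) (\<lambda>j. c j \<cdot>\<^sub>v v j) {..<n} $ r" by simp
  next
    have cl: "(\<lambda>j. c j \<cdot>\<^sub>v v j) \<in> {..<n} \<rightarrow> carrier_vec n" using vc by auto
    show "dim_vec (U *\<^sub>v h) = dim_vec (finsum_vec TYPE(real) (dim_row A) (\<lambda>j. c j \<cdot>\<^sub>v v j) {..<n})"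
      using finsum_vec_closed[OF cl] A U by simp
  qed
  moreover have "\<forall>j<n. eigenvector A (v j) (mu j) \<and> \<bar>mu j\<bar> \<ge> t"
    unfolding v_def mu_def using eig j0 by auto
  ultimately have "U *\<^sub>v h \<in> eig_span A t" unfolding eig_span_def by blast
  moreover have "subspace_embedding S (min (L / t) (1/10)) (eig_span A t)" using aL t
    unfolding assumption_L_def by blast
  ultimately show ?thesis unfolding subspace_embedding_def by blast
qed

lemma sq_lower:
  fixes g c :: "nat \<Rightarrow> real"
  assumes e: "\<epsilon> > 0" and e1: "\<epsilon> \<le> 1" and C: "(\<Sum>j\<in>E. (c j)^2) \<le> \<epsilon>^2 * (\<Sum>j\<in>E. (g j)^2)"
  shows "(\<Sum>j\<in>E. (g j + c j)^2) \<ge> (1 - \<epsilon>)^2 * (\<Sum>j\<in>E. (g j)^2)"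
proof -
  have trm: "\<And>j. (g j + c j)^2 \<ge> (1 - \<epsilon>) * (g j)^2 + (1 - 1/\<epsilon>) * (c j)^2"
  proof -
    fix j
    have "(g j + c j)^2 - ((1 - \<epsilon>) * (g j)^2 + (1 - 1/\<epsilon>) * (c j)^2) = (\<epsilon> * g j + c j)^2 / \<epsilon>"
      using e by (simp add: field_simps power2_eq_square)
    also have "\<dots> \<ge> 0" using e by simp
    finally show "(g j + c j)^2 \<ge> (1 - \<epsilon>) * (g j)^2 + (1 - 1/\<epsilon>) * (c j)^2" by simp
  qed
  define G where "G = (\<Sum>j\<in>E. (g j)^2)"
  define CC where "CC = (\<Sum>j\<in>E. (c j)^2)"
  have "(\<Sum>j\<in>E. (g j + c j)^2) \<ge> (\<Sum>j\<in>E. (1 - \<epsilon>) * (g j)^2 + (1 - 1/\<epsilon>) * (c j)^2)"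
    by (rule sum_mono) (rule trm)
  also have "(\<Sum>j\<in>E. (1 - \<epsilon>) * (g j)^2 + (1 - 1/\<epsilon>) * (c j)^2) = (1 - \<epsilon>) * G + (1 - 1/\<epsilon>) * CC"
    unfolding G_def CC_def by (simp add: sum.distrib sum_distrib_left)
  finally have 1: "(\<Sum>j\<in>E. (g j + c j)^2) \<ge> (1 - \<epsilon>) * G + (1 - 1/\<epsilon>) * CC" .
  have neg: "1 - 1/\<epsilon> \<le> 0" using e e1 by (simp add: field_simps)
  have "(1 - 1/\<epsilon>) * CC \<ge> (1 - 1/\<epsilon>) * (\<epsilon>^2 * G)" unfolding CC_def G_def
    by (rule mult_left_mono_neg[OF C neg])
  also have "(1 - 1/\<epsilon>) * (\<epsilon>^2 * G) = (\<epsilon>^2 - \<epsilon>) * G" using e by (simp add: field_simps power2_eq_square)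
  finally have "(\<Sum>j\<in>E. (g j + c j)^2) \<ge> (1 - \<epsilon>) * G + (\<epsilon>^2 - \<epsilon>) * G" using 1 by linarith
  moreover have "(1 - \<epsilon>) * G + (\<epsilon>^2 - \<epsilon>) * G = (1 - \<epsilon>)^2 * G" by (simp add: algebra_simps power2_eq_square)
  ultimately show ?thesis unfolding G_def by simp
qed

lemma delta_bound:
  fixes L t :: real
  assumes L: "L > 0" and t: "t > 0"
  shows "min (L / max t L) (1/10) \<le> 2 * L / (t + 10 * L)"
proof (cases "t \<le> 10 * L")
  case True
  have "1/10 \<le> 2 * L / (t + 10 * L)" using True L t by (simp add: field_simps)
  thus ?thesis by simp
next
  case False
  hence tL: "max t L = t" using L by simp
  have "2 * L / (2 * t) \<le> 2 * L / (t + 10 * L)"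
    by (rule divide_left_mono) (use False L t in auto)
  hence "L / t \<le> 2 * L / (t + 10 * L)" using t by simp
  thus ?thesis unfolding tL by simp
qed

lemma final_arith:
  fixes lam L eps X Y Q :: real
  assumes lam: "lam > 0" and L: "L > 0" and e: "eps > 0" "eps \<le> 1/10" and le: "lam * eps \<le> L"
    and X: "X > 0" and Y1: "(1 - eps) * X \<le> Y" and Y2: "Y \<le> (1 + eps) * X"
    and Q1: "Q \<ge> lam * (1 - eps)^2 * X - 4 * L^2 * X / (10 * L)"
    and Q2: "Q \<le> (lam - 51 * L) * Y"
  shows False
proof -
  have "(1 - eps)^2 \<ge> 1 - 2 * eps" by (simp add: power2_eq_square algebra_simps)
  hence "lam * X * (1 - eps)^2 \<ge> lam * X * (1 - 2 * eps)" using lam X by (intro mult_left_mono) auto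
  moreover have "lam * X * (1 - 2 * eps) = lam * X - 2 * ((lam * eps) * X)" by (simp add: algebra_simps)
  moreover have "(lam * eps) * X \<le> L * X" using le X by (intro mult_right_mono) auto
  moreover have "4 * L^2 * X / (10 * L) = (2/5) * (L * X)" using L by (simp add: power2_eq_square)
  ultimately have lo: "Q \<ge> lam * X - (12/5) * (L * X)" using Q1 by (simp add: algebra_simps)
  have LX: "L * X > 0" using L X by simp
  show False
  proof (cases "lam - 51 * L \<ge> 0")
    case True
    have "(lam - 51 * L) * Y \<le> (lam - 51 * L) * ((1 + eps) * X)" by (rule mult_left_mono[OF Y2 True])
    also have "\<dots> = lam * X - 51 * (L * X) + eps * (lam - 51 * L) * X" by (simp add: algebra_simps)
    also have "eps * (lam - 51 * L) * X \<le> eps * lam * X"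
      using e X L by (intro mult_right_mono mult_left_mono) auto
    also have "eps * lam * X \<le> L * X" using le X by (simp add: mult.commute)
    finally show False using Q2 lo LX by linarith
  next
    case False
    have "(lam - 51 * L) * Y \<le> (lam - 51 * L) * ((1 - eps) * X)" using False Y1
      by (intro mult_left_mono_neg) auto
    also have "\<dots> = lam * X - 51 * (L * X) + eps * (51 * L - lam) * X" by (simp add: algebra_simps)
    also have "eps * (51 * L - lam) * X \<le> (1/10) * (51 * L) * X"
      using e X L lam False by (intro mult_right_mono mult_mono) auto
    finally show False using Q2 lo LX by (simp add: algebra_simps) 
  qed
qed


lemma support_pol:
  fixes A S U :: "real mat"
  assumes A: "A \<in> carrier_mat n n" and S: "S \<in> carrier_mat k n" and U: "U \<in> carrier_mat n n"
    and UU: "U\<^sup>T * U = 1\<^sub>m n"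
    and eig: "\<And>j. j < n \<Longrightarrow> eigenvector A (col U j) (es ! j)"
    and aL: "assumption_L S A L" and L: "L > 0" and t: "L \<le> t"
    and g: "g \<in> carrier_vec n" and suppg: "\<And>j. j < n \<Longrightarrow> g $ j \<noteq> 0 \<Longrightarrow> j \<in> F"
    and Fbig: "\<And>j. j \<in> F \<Longrightarrow> t \<le> \<bar>es ! j\<bar>" and J: "J \<subseteq> F" and Jn: "J \<subseteq> {..<n}"
  shows "(\<Sum>j\<in>J. ((S *\<^sub>v col U j) \<bullet> (S *\<^sub>v (U *\<^sub>v g)) - col U j \<bullet> (U *\<^sub>v g))^2)
     \<le> (min (L/t) (1/10))^2 * (g \<bullet> g)"
proof -
  define x where "x = U *\<^sub>v g"
  have x: "x \<in> carrier_vec n" unfolding x_def using U g by simp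
  define cE where "cE = (\<lambda>j. (S *\<^sub>v col U j) \<bullet> (S *\<^sub>v x) - col U j \<bullet> x)"
  define hw where "hw = vec n (\<lambda>j. if j \<in> J then cE j else 0)"
  have hw: "hw \<in> carrier_vec n" unfolding hw_def by simp
  define w where "w = U *\<^sub>v hw"
  have w: "w \<in> carrier_vec n" unfolding w_def using U hw by simp
  have finJ: "finite J" using Jn finite_subset by blast
  have ww: "w \<bullet> w = (\<Sum>j\<in>J. (cE j)^2)"
  proof -
    have "w \<bullet> w = hw \<bullet> hw" unfolding w_def by (rule orth_norm[OF U UU hw])
    also have "\<dots> = (\<Sum>j\<in>{0..<n}. (if j \<in> J then (cE j)^2 else 0))"
      unfolding hw_def by (simp add: scalar_prod_def power2_eq_square if_distrib cong: if_cong)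
    also have "\<dots> = (\<Sum>j\<in>{0..<n} \<inter> J. (cE j)^2)" by (rule sum.inter_restrict[symmetric]) simp
    also have "{0..<n} \<inter> J = J" using Jn by auto
    finally show ?thesis .
  qed
  have exw: "(S *\<^sub>v x) \<bullet> (S *\<^sub>v w) - x \<bullet> w = w \<bullet> w"
  proof -
    have "(S *\<^sub>v x) \<bullet> (S *\<^sub>v w) - x \<bullet> w = (\<Sum>j<n. hw $ j * cE j)"
      unfolding w_def cE_def by (rule ebil[OF U S x hw])
    also have "\<dots> = (\<Sum>j\<in>{..<n}. (if j \<in> J then (cE j)^2 else 0))"
      by (rule sum.cong) (auto simp: hw_def power2_eq_square)
    also have "\<dots> = (\<Sum>j\<in>{..<n} \<inter> J. (cE j)^2)" by (rule sum.inter_restrict[symmetric]) simp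
    also have "{..<n} \<inter> J = J" using Jn by auto
    finally show ?thesis using ww by simp
  qed
  define \<delta> where "\<delta> = min (L/t) (1/10)"
  have d: "\<delta> > 0" unfolding \<delta>_def using L t by simp
  have "w \<bullet> w \<le> \<delta>^2 * (x \<bullet> x)"
  proof (rule pol_vec[OF S x w d _ exw])
    fix s :: real
    have gs: "g + s \<cdot>\<^sub>v hw \<in> carrier_vec n" using g hw by simp
    have e: "x + s \<cdot>\<^sub>v w = U *\<^sub>v (g + s \<cdot>\<^sub>v hw)" unfolding x_def w_def
      using U g hw by (simp add: mult_add_distrib_mat_vec mult_mat_vec)
    have supp: "\<And>j. j < n \<Longrightarrow> (g + s \<cdot>\<^sub>v hw) $ j \<noteq> 0 \<Longrightarrow> t \<le> \<bar>es ! j\<bar>"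
    proof -
      fix j assume j: "j < n" and nz: "(g + s \<cdot>\<^sub>v hw) $ j \<noteq> 0"
      have "g $ j \<noteq> 0 \<or> j \<in> J" using nz j g hw unfolding hw_def by (auto split: if_splits)
      hence "j \<in> F" using suppg[OF j] J by auto
      thus "t \<le> \<bar>es ! j\<bar>" by (rule Fbig)
    qed
    show "(1 - \<delta>) * ((x + s \<cdot>\<^sub>v w) \<bullet> (x + s \<cdot>\<^sub>v w)) \<le> (S *\<^sub>v (x + s \<cdot>\<^sub>v w)) \<bullet> (S *\<^sub>v (x + s \<cdot>\<^sub>v w)) \<and>
       (S *\<^sub>v (x + s \<cdot>\<^sub>v w)) \<bullet> (S *\<^sub>v (x + s \<cdot>\<^sub>v w)) \<le> (1 + \<delta>) * ((x + s \<cdot>\<^sub>v w) \<bullet> (x + s \<cdot>\<^sub>v w))"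
      unfolding e \<delta>_def by (rule emb[OF A S U eig aL t gs supp])
  qed
  moreover have "x \<bullet> x = g \<bullet> g" unfolding x_def by (rule orth_norm[OF U UU g])
  ultimately show ?thesis unfolding \<delta>_def ww cE_def x_def by simp
qed


lemma core:
  fixes A S U V :: "real mat" and es nus :: "real list" and lam L :: real
  assumes A: "A \<in> carrier_mat n n" and S: "S \<in> carrier_mat k n" and L: "L > 0"
   and U: "U \<in> carrier_mat n n" and UU: "U\<^sup>T * U = 1\<^sub>m n" and les: "length es = n"
   and AD: "A = U * diagm n es * U\<^sup>T"
   and V: "V \<in> carrier_mat k k" and VV': "V * V\<^sup>T = 1\<^sub>m k" and MD: "S * A * S\<^sup>T = V * diagm k nus * V\<^sup>T"
   and nz: "\<And>j. j < n \<Longrightarrow> es ! j \<noteq> 0 \<Longrightarrow> L \<le> \<bar>es ! j\<bar>"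
   and aL: "assumption_L S A L"
   and lam0: "lam > 0" and lamL: "L \<le> lam"
   and cnt: "i \<le> card {j. j < n \<and> lam \<le> es ! j}"
  shows "i \<le> card {l. l < k \<and> lam - 51 * L \<le> nus ! l}"
proof (rule ccontr)
  define c where "c = lam - 51 * L"
  define Good where "Good = {l. l < k \<and> c \<le> nus ! l}"
  assume "\<not> i \<le> card {l. l < k \<and> lam - 51 * L \<le> nus ! l}"
  hence cG: "card Good < i" unfolding Good_def c_def by simp
  obtain T where T: "T \<subseteq> {j. j < n \<and> lam \<le> es ! j}" and cT: "card T = i" and finT: "finite T"
    using obtain_subset_with_card_n[OF cnt] by blast
  define Nb where "Nb = {j. j < n \<and> es ! j \<le> - lam}"
  define Ns where "Ns = {j. j < n \<and> - lam < es ! j \<and> es ! j < 0}"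
  define E where "E = T \<union> Nb"
  have finNb: "finite Nb" unfolding Nb_def by simp
  have finGood: "finite Good" unfolding Good_def by simp
  have disj: "T \<inter> Nb = {}" using T lam0 unfolding Nb_def by force
  have cE: "card E = i + card Nb" unfolding E_def using card_Un_disjoint[OF finT finNb disj] cT by simp
  have En: "E \<subseteq> {0..<n}" unfolding E_def Nb_def using T by auto
  have finE: "finite E" using En finite_subset by blast
  have cEn: "card E \<le> n" using card_mono[OF _ En] by simp
  define r1 where "r1 = (\<lambda>j. U\<^sup>T *\<^sub>v (S\<^sup>T *\<^sub>v (S *\<^sub>v col U j)))"
  define r2 where "r2 = (\<lambda>l. U\<^sup>T *\<^sub>v (S\<^sup>T *\<^sub>v col V l))"
  define R where "R = r1 ` Nb \<union> r2 ` Good \<union> (\<lambda>j. unit_vec n j) ` ({0..<n} - E)"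
  have finR: "finite R" unfolding R_def using finNb finGood by simp
  have dU: "dim_col U = n" using U by simp
  have UTv: "\<And>v. U\<^sup>T *\<^sub>v v \<in> carrier_vec n" by (rule carrier_vecI) (simp add: dU)
  have Rc: "R \<subseteq> carrier_vec n" unfolding R_def r1_def r2_def using UTv by auto
  have c1: "card R \<le> card (r1 ` Nb \<union> r2 ` Good) + card ((\<lambda>j. unit_vec n j :: real vec) ` ({0..<n} - E))"
    unfolding R_def using card_Un_le[of "r1 ` Nb \<union> r2 ` Good" "(\<lambda>j. unit_vec n j :: real vec) ` ({0..<n} - E)"] by simp
  have c2: "card (r1 ` Nb \<union> r2 ` Good) \<le> card (r1 ` Nb) + card (r2 ` Good)"
    using card_Un_le[of "r1 ` Nb" "r2 ` Good"] by simp
  have c3: "card (r1 ` Nb) \<le> card Nb" by (rule card_image_le[OF finNb])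
  have c4: "card (r2 ` Good) \<le> card Good" by (rule card_image_le[OF finGood])
  have c5: "card ((\<lambda>j. unit_vec n j :: real vec) ` ({0..<n} - E)) \<le> card ({0..<n} - E)" by (rule card_image_le) simp
  have c6: "card ({0..<n} - E) = n - card E" using card_Diff_subset[OF finE En] by simp
  have "card R < n" using c1 c2 c3 c4 c5 c6 cG cE cEn by linarith
  from kernel_exists[OF finR Rc this] obtain g where g: "g \<in> carrier_vec n" and g0: "g \<noteq> 0\<^sub>v n"
    and gR: "\<forall>r\<in>R. r \<bullet> g = 0" by blast
  define x where "x = U *\<^sub>v g"
  define y where "y = S *\<^sub>v x"
  have x: "x \<in> carrier_vec n" unfolding x_def using U g by simp
  have y: "y \<in> carrier_vec k" unfolding y_def using S x by simp
  have ux: "\<And>j. j < n \<Longrightarrow> col U j \<bullet> x = g $ j" unfolding x_def by (rule orth_coord[OF U UU g])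
  have gz: "\<And>j. j < n \<Longrightarrow> j \<notin> E \<Longrightarrow> g $ j = 0"
  proof -
    fix j assume j: "j < n" "j \<notin> E"
    hence "unit_vec n j \<in> R" unfolding R_def by auto
    hence "unit_vec n j \<bullet> g = 0" using gR by auto
    thus "g $ j = 0" using j g by simp
  qed
  have gNb: "\<And>j. j \<in> Nb \<Longrightarrow> (S *\<^sub>v col U j) \<bullet> y = 0"
  proof -
    fix j assume j: "j \<in> Nb"
    hence jn: "j < n" unfolding Nb_def by simp
    have uj: "col U j \<in> carrier_vec n" using U jn by simp
    have Su: "S *\<^sub>v col U j \<in> carrier_vec k" using S uj by simp
    have q: "S\<^sup>T *\<^sub>v (S *\<^sub>v col U j) \<in> carrier_vec n" using S Su by simp
    have "r1 j \<in> R" unfolding R_def using j by auto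
    hence "0 = r1 j \<bullet> g" using gR by auto
    also have "\<dots> = (S\<^sup>T *\<^sub>v (S *\<^sub>v col U j)) \<bullet> x"
      unfolding r1_def x_def using transpose_vec_mult_scalar[OF U g q] .
    also have "\<dots> = (S *\<^sub>v col U j) \<bullet> y" unfolding y_def using transpose_vec_mult_scalar[OF S x Su] .
    finally show "(S *\<^sub>v col U j) \<bullet> y = 0" by simp
  qed
  have gGood: "\<And>l. l \<in> Good \<Longrightarrow> col V l \<bullet> y = 0"
  proof -
    fix l assume l: "l \<in> Good"
    hence ln: "l < k" unfolding Good_def by simp
    have p: "col V l \<in> carrier_vec k" using V ln by simp
    have q: "S\<^sup>T *\<^sub>v col V l \<in> carrier_vec n" using S p by simp
    have "r2 l \<in> R" unfolding R_def using l by auto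
    hence "0 = r2 l \<bullet> g" using gR by auto
    also have "\<dots> = (S\<^sup>T *\<^sub>v col V l) \<bullet> x"
      unfolding r2_def x_def using transpose_vec_mult_scalar[OF U g q] .
    also have "\<dots> = col V l \<bullet> y" unfolding y_def using transpose_vec_mult_scalar[OF S x p] .
    finally show "col V l \<bullet> y = 0" by simp
  qed
  have Xg: "x \<bullet> x = g \<bullet> g" unfolding x_def by (rule orth_norm[OF U UU g])
  have Xpos: "x \<bullet> x > 0" unfolding Xg using conjugate_square_greater_0_vec[OF g] g0 by simp
  have gsum: "g \<bullet> g = (\<Sum>j\<in>E. (g $ j)^2)"
  proof -
    have "g \<bullet> g = (\<Sum>j\<in>{0..<n}. (g $ j)^2)" using g by (simp add: scalar_prod_def power2_eq_square)
    also have "\<dots> = (\<Sum>j\<in>E. (g $ j)^2)"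
      by (rule sum.mono_neutral_right[OF _ En]) (use gz in auto)
    finally show ?thesis .
  qed
  define eps where "eps = min (L/lam) (1/10)"
  have eps0: "eps > 0" unfolding eps_def using L lam0 by simp
  have eps1: "eps \<le> 1/10" unfolding eps_def by (rule min.cobounded2)
  have leps: "lam * eps \<le> L"
  proof -
    have "lam * eps \<le> lam * (L / lam)" unfolding eps_def using lam0 by (intro mult_left_mono) auto
    thus ?thesis using lam0 by simp
  qed
  have eig: "\<And>j. j < n \<Longrightarrow> eigenvector A (col U j) (es ! j)" by (rule eig_cols[OF U UU les AD])
  have suppE: "\<And>j. j \<in> E \<Longrightarrow> lam \<le> \<bar>es ! j\<bar>" unfolding E_def Nb_def using T by auto
  have suppg: "\<And>j. j < n \<Longrightarrow> g $ j \<noteq> 0 \<Longrightarrow> j \<in> E" using gz by blast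
  have suppL: "\<And>j. j < n \<Longrightarrow> g $ j \<noteq> 0 \<Longrightarrow> lam \<le> \<bar>es ! j\<bar>"
  proof -
    fix j assume "j < n" "g $ j \<noteq> 0"
    hence "j \<in> E" by (rule suppg)
    thus "lam \<le> \<bar>es ! j\<bar>" by (rule suppE)
  qed
  have EMBx: "(1 - eps) * (x \<bullet> x) \<le> y \<bullet> y \<and> y \<bullet> y \<le> (1 + eps) * (x \<bullet> x)"
    unfolding eps_def x_def y_def
    by (rule emb[OF A S U eig aL lamL g suppL])
  define rho where "rho = (\<lambda>j. (S *\<^sub>v col U j) \<bullet> y)"
  have quadM: "y \<bullet> ((S * A * S\<^sup>T) *\<^sub>v y) = (\<Sum>j<n. es ! j * (rho j)^2)"
  proof -
    define z where "z = S\<^sup>T *\<^sub>v y"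
    have z: "z \<in> carrier_vec n" unfolding z_def using S y by simp
    have Az: "A *\<^sub>v z \<in> carrier_vec n" using A z by simp
    have SA: "S * A \<in> carrier_mat k n" using S A by simp
    have ST: "S\<^sup>T \<in> carrier_mat n k" using S by simp
    have "(S * A * S\<^sup>T) *\<^sub>v y = (S * A) *\<^sub>v (S\<^sup>T *\<^sub>v y)" by (rule assoc_mult_mat_vec[OF SA ST y])
    also have "\<dots> = S *\<^sub>v (A *\<^sub>v z)" unfolding z_def by (rule assoc_mult_mat_vec[OF S A z[unfolded z_def]])
    finally have "(S * A * S\<^sup>T) *\<^sub>v y = S *\<^sub>v (A *\<^sub>v z)" .
    hence "y \<bullet> ((S * A * S\<^sup>T) *\<^sub>v y) = z \<bullet> (A *\<^sub>v z)"
      using transpose_vec_mult_scalar[OF S Az y] unfolding z_def by simp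
    also have "\<dots> = (\<Sum>j<n. es ! j * (col U j \<bullet> z)^2)" by (rule quad_expansion[OF U AD z])
    also have "\<dots> = (\<Sum>j<n. es ! j * (rho j)^2)"
    proof (rule sum.cong[OF refl])
      fix j assume "j \<in> {..<n}"
      hence uj: "col U j \<in> carrier_vec n" using U by simp
      have Su: "S *\<^sub>v col U j \<in> carrier_vec k" using S uj by simp
      have "col U j \<bullet> z = z \<bullet> col U j" using comm_scalar_prod[OF uj z] .
      also have "\<dots> = y \<bullet> (S *\<^sub>v col U j)" unfolding z_def using transpose_vec_mult_scalar[OF S uj y] .
      also have "\<dots> = rho j" unfolding rho_def using comm_scalar_prod[OF y Su] .
      finally show "es ! j * (col U j \<bullet> z)^2 = es ! j * (rho j)^2" by simp
    qed
    finally show ?thesis .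
  qed
  have upper: "y \<bullet> ((S * A * S\<^sup>T) *\<^sub>v y) \<le> c * (y \<bullet> y)"
  proof -
    have "y \<bullet> ((S * A * S\<^sup>T) *\<^sub>v y) = (\<Sum>l<k. nus ! l * (col V l \<bullet> y)^2)"
      unfolding MD by (rule quad_expansion[OF V refl y])
    also have "\<dots> \<le> (\<Sum>l<k. c * (col V l \<bullet> y)^2)"
    proof (rule sum_mono)
      fix l assume l: "l \<in> {..<k}"
      show "nus ! l * (col V l \<bullet> y)^2 \<le> c * (col V l \<bullet> y)^2"
      proof (cases "l \<in> Good")
        case True thus ?thesis using gGood by simp
      next
        case False
        hence "nus ! l < c" using l unfolding Good_def by auto
        thus ?thesis by (intro mult_right_mono) auto
      qed
    qed
    also have "\<dots> = c * (\<Sum>l<k. (col V l \<bullet> y)^2)" by (simp add: sum_distrib_left)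
    also have "(\<Sum>l<k. (col V l \<bullet> y)^2) = y \<bullet> y" by (rule norm_expansion[OF V VV' y, symmetric])
    finally show ?thesis .
  qed
  have lower: "(\<Sum>j<n. es ! j * (rho j)^2) \<ge> lam * (\<Sum>j\<in>T. (rho j)^2) - (\<Sum>j\<in>Ns. \<bar>es ! j\<bar> * (rho j)^2)"
  proof -
    have Tn: "T \<subseteq> {..<n}" using T by auto
    have Nsn: "Ns \<subseteq> {..<n}" unfolding Ns_def by auto
    have mono: "(\<Sum>j<n. es ! j * (rho j)^2) \<ge> (\<Sum>j<n. (if j \<in> T then lam * (rho j)^2 else 0) - (if j \<in> Ns then \<bar>es ! j\<bar> * (rho j)^2 else 0))"
    proof (rule sum_mono)
      fix j assume j: "j \<in> {..<n}"
      show "(if j \<in> T then lam * (rho j)^2 else 0) - (if j \<in> Ns then \<bar>es ! j\<bar> * (rho j)^2 else 0) \<le> es ! j * (rho j)^2"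
      proof (cases "j \<in> T")
        case True
        hence "lam \<le> es ! j" "j \<notin> Ns" using T lam0 unfolding Ns_def by auto
        thus ?thesis using True by (simp add: mult_right_mono)
      next
        case nT: False
        show ?thesis
        proof (cases "j \<in> Ns")
          case True thus ?thesis using nT unfolding Ns_def by auto
        next
          case nNs: False
          show ?thesis
          proof (cases "j \<in> Nb")
            case True thus ?thesis using nT nNs gNb[OF True] unfolding rho_def by simp
          next
            case False
            hence "es ! j \<ge> 0" using j nNs unfolding Nb_def Ns_def by auto
            thus ?thesis using nT nNs by simp
          qed
        qed
      qed
    qed
    have sub: "(\<Sum>j<n. (if j \<in> T then lam * (rho j)^2 else 0) - (if j \<in> Ns then \<bar>es ! j\<bar> * (rho j)^2 else 0))
       = (\<Sum>j<n. (if j \<in> T then lam * (rho j)^2 else 0)) - (\<Sum>j<n. (if j \<in> Ns then \<bar>es ! j\<bar> * (rho j)^2 else 0))"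
      by (rule sum_subtractf)
    have eqT: "(\<Sum>j<n. (if j \<in> T then lam * (rho j)^2 else 0)) = lam * (\<Sum>j\<in>T. (rho j)^2)"
    proof -
      have "(\<Sum>j<n. (if j \<in> T then lam * (rho j)^2 else 0)) = (\<Sum>j\<in>{..<n} \<inter> T. lam * (rho j)^2)"
        by (rule sum.inter_restrict[symmetric]) simp
      also have "{..<n} \<inter> T = T" using Tn by auto
      finally show ?thesis by (simp add: sum_distrib_left)
    qed
    have eqN: "(\<Sum>j<n. (if j \<in> Ns then \<bar>es ! j\<bar> * (rho j)^2 else 0)) = (\<Sum>j\<in>Ns. \<bar>es ! j\<bar> * (rho j)^2)"
    proof -
      have "(\<Sum>j<n. (if j \<in> Ns then \<bar>es ! j\<bar> * (rho j)^2 else 0)) = (\<Sum>j\<in>{..<n} \<inter> Ns. \<bar>es ! j\<bar> * (rho j)^2)"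
        by (rule sum.inter_restrict[symmetric]) simp
      also have "{..<n} \<inter> Ns = Ns" using Nsn by auto
      finally show ?thesis .
    qed
    show ?thesis using mono sub eqT eqN by linarith
  qed
  define cE where "cE = (\<lambda>j. (S *\<^sub>v col U j) \<bullet> (S *\<^sub>v (U *\<^sub>v g)) - col U j \<bullet> (U *\<^sub>v g))"
  have rhoE: "\<And>j. j < n \<Longrightarrow> rho j = g $ j + cE j"
  proof -
    fix j assume j: "j < n"
    have "col U j \<bullet> (U *\<^sub>v g) = g $ j" using ux[OF j] unfolding x_def .
    thus "rho j = g $ j + cE j" unfolding rho_def cE_def y_def x_def by simp
  qed
  have En': "E \<subseteq> {..<n}" using En by auto
  have polE: "(\<Sum>j\<in>E. (cE j)^2) \<le> eps^2 * (g \<bullet> g)" unfolding cE_def eps_def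
    by (rule support_pol[OF A S U UU eig aL L lamL g suppg suppE subset_refl En'])
  have partT: "(\<Sum>j\<in>T. (rho j)^2) \<ge> (1 - eps)^2 * (x \<bullet> x)"
  proof -
    have "(\<Sum>j\<in>E. (rho j)^2) = (\<Sum>j\<in>T. (rho j)^2) + (\<Sum>j\<in>Nb. (rho j)^2)"
      unfolding E_def by (rule sum.union_disjoint[OF finT finNb disj])
    also have "(\<Sum>j\<in>Nb. (rho j)^2) = 0" using gNb unfolding rho_def by simp
    finally have 1: "(\<Sum>j\<in>T. (rho j)^2) = (\<Sum>j\<in>E. (rho j)^2)" by simp
    have 2: "(\<Sum>j\<in>E. (rho j)^2) = (\<Sum>j\<in>E. (g $ j + cE j)^2)"
      by (rule sum.cong[OF refl]) (use rhoE En in auto)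
    have "(\<Sum>j\<in>E. (cE j)^2) \<le> eps^2 * (\<Sum>j\<in>E. (g $ j)^2)" using polE gsum by simp
    from sq_lower[OF eps0 _ this] eps1
    have "(\<Sum>j\<in>E. (g $ j + cE j)^2) \<ge> (1 - eps)^2 * (\<Sum>j\<in>E. (g $ j)^2)" by simp
    thus ?thesis using 1 2 Xg gsum by simp
  qed
  have NsE: "\<And>j. j \<in> Ns \<Longrightarrow> j \<notin> E" unfolding Ns_def using suppE by force
  have finNs: "finite Ns" unfolding Ns_def by simp
  define K where "K = 4 * L^2 * (x \<bullet> x)"
  have K0: "K \<ge> 0" unfolding K_def using Xpos by simp
  have partN: "(\<Sum>j\<in>Ns. \<bar>es ! j\<bar> * (rho j)^2) \<le> K / (10 * L)"
  proof (rule abel_sum[OF L K0 finNs])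
    show "\<forall>j\<in>Ns. 0 \<le> (rho j)^2" by simp
    show "\<forall>j\<in>Ns. 0 < \<bar>es ! j\<bar>" unfolding Ns_def by auto
    show "\<forall>t>0. (\<Sum>j\<in>{j\<in>Ns. t \<le> \<bar>es ! j\<bar>}. (rho j)^2) \<le> K / (t + 10 * L)^2"
    proof (intro allI impI)
      fix t :: real assume t0: "t > 0"
      define J' where "J' = {j\<in>Ns. t \<le> \<bar>es ! j\<bar>}"
      show "(\<Sum>j\<in>{j\<in>Ns. t \<le> \<bar>es ! j\<bar>}. (rho j)^2) \<le> K / (t + 10 * L)^2"
      proof (cases "J' = {}")
        case True
        hence e: "{j\<in>Ns. t \<le> \<bar>es ! j\<bar>} = {}" unfolding J'_def .
        show ?thesis unfolding e using K0 by simp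
      next
        case False
        then obtain j1 where j1: "j1 \<in> J'" by blast
        define t' where "t' = max t L"
        have t'L: "L \<le> t'" unfolding t'_def by simp
        have j1n: "j1 < n" "- lam < es ! j1" "es ! j1 < 0" "t \<le> \<bar>es ! j1\<bar>"
          using j1 unfolding J'_def Ns_def by auto
        have "L \<le> \<bar>es ! j1\<bar>" using nz[OF j1n(1)] j1n(3) by simp
        hence t'j1: "t' \<le> \<bar>es ! j1\<bar>" unfolding t'_def using j1n(4) by simp
        have t'lam: "t' < lam" using t'j1 j1n(2,3) by simp
        define F where "F = E \<union> J'"
        have suppg': "\<And>j. j < n \<Longrightarrow> g $ j \<noteq> 0 \<Longrightarrow> j \<in> F" unfolding F_def using suppg by blast
        have Fbig: "\<And>j. j \<in> F \<Longrightarrow> t' \<le> \<bar>es ! j\<bar>"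
        proof -
          fix j assume "j \<in> F"
          hence "j \<in> E \<or> j \<in> J'" unfolding F_def by simp
          thus "t' \<le> \<bar>es ! j\<bar>"
          proof
            assume "j \<in> E" thus ?thesis using suppE t'lam by force
          next
            assume jJ: "j \<in> J'"
            hence jn: "j < n" "es ! j \<noteq> 0" "t \<le> \<bar>es ! j\<bar>" unfolding J'_def Ns_def by auto
            thus ?thesis using nz[OF jn(1,2)] unfolding t'_def by simp
          qed
        qed
        have J'F: "J' \<subseteq> F" unfolding F_def by simp
        have J'n: "J' \<subseteq> {..<n}" unfolding J'_def Ns_def by auto
        have pol: "(\<Sum>j\<in>J'. (cE j)^2) \<le> (min (L/t') (1/10))^2 * (g \<bullet> g)" unfolding cE_def
          by (rule support_pol[OF A S U UU eig aL L t'L g suppg' Fbig J'F J'n])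
        have rr: "(\<Sum>j\<in>J'. (rho j)^2) = (\<Sum>j\<in>J'. (cE j)^2)"
        proof (rule sum.cong[OF refl])
          fix j assume j: "j \<in> J'"
          hence "j < n" "j \<in> Ns" unfolding J'_def Ns_def by auto
          hence "rho j = cE j" using rhoE gz NsE by simp
          thus "(rho j)^2 = (cE j)^2" by simp
        qed
        have db: "min (L/t') (1/10) \<le> 2 * L / (t + 10 * L)" unfolding t'_def by (rule delta_bound[OF L t0])
        have "(min (L/t') (1/10))^2 \<le> (2 * L / (t + 10 * L))^2"
          by (rule power_mono[OF db]) (use L t'L in simp)
        hence "(min (L/t') (1/10))^2 * (g \<bullet> g) \<le> (2 * L / (t + 10 * L))^2 * (g \<bullet> g)"
          using Xpos Xg by (intro mult_right_mono) auto
        also have "(2 * L / (t + 10 * L))^2 * (g \<bullet> g) = K / (t + 10 * L)^2"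
          unfolding K_def Xg by (simp add: power_divide power_mult_distrib)
        finally show ?thesis using pol rr unfolding J'_def by simp
      qed
    qed
  qed
  define Q where "Q = y \<bullet> ((S * A * S\<^sup>T) *\<^sub>v y)"
  have Q1: "Q \<ge> lam * (1 - eps)^2 * (x \<bullet> x) - 4 * L^2 * (x \<bullet> x) / (10 * L)"
  proof -
    have "lam * ((1 - eps)^2 * (x \<bullet> x)) \<le> lam * (\<Sum>j\<in>T. (rho j)^2)"
      using partT lam0 by (intro mult_left_mono) auto
    thus ?thesis using lower partN quadM unfolding Q_def K_def by (simp add: mult.assoc)
  qed
  have Q2: "Q \<le> (lam - 51 * L) * (y \<bullet> y)" using upper unfolding Q_def c_def .
  show False
    by (rule final_arith[OF lam0 L eps0 eps1 leps Xpos _ _ Q1 Q2]) (use EMBx in auto)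
qed


theorem mainTheorem14:
  fixes A S :: "real mat" and n k i :: nat and L :: real
  assumes "A \<in> carrier_mat n n" and "A\<^sup>T = A"
    and "L > 0"
    and "\<And>\<mu>. eigenvalue A \<mu> \<Longrightarrow> \<mu> \<noteq> 0 \<Longrightarrow> \<bar>\<mu>\<bar> \<ge> L"
    and "S \<in> carrier_mat k n"
    and "assumption_L S A L"
    and "1 \<le> i" and "i \<le> num_eigvals A" and "lam A i > 0"
  shows "i \<le> num_eigvals (S * A * S\<^sup>T) \<and> lam (S * A * S\<^sup>T) i \<ge> lam A i - 51 * L"
proof -
  note A = assms(1) and sym = assms(2) and L = assms(3) and evL = assms(4) and S = assms(5)
    and aL = assms(6) and i1 = assms(7) and inum = assms(8) and lpos = assms(9)
  from spectral_full[OF A sym] obtain U es where U: "U \<in> carrier_mat n n" and UU: "U\<^sup>T * U = 1\<^sub>m n"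
    and UU': "U * U\<^sup>T = 1\<^sub>m n" and les: "length es = n" and AD: "A = U * diagm n es * U\<^sup>T"
    and mA: "mset es = proots (char_poly A)" by blast
  have numA: "num_eigvals A = n" unfolding num_eigvals_def mA[symmetric] using les by simp
  have descA: "eigvals_desc A = rev (sort es)" unfolding eigvals_desc_def mA[symmetric]
    by (simp add: sorted_list_of_multiset_mset)
  define lm where "lm = lam A i"
  have lmdef: "lm = rev (sort es) ! (i - 1)" unfolding lm_def lam_def descA ..
  have iA: "i \<le> n" using inum numA by simp
  have cntA: "i \<le> card {j. j < n \<and> lm \<le> es ! j}"
    using count_ge_sorted[of i es] i1 iA les unfolding lmdef by simp
  have eig: "\<And>j. j < n \<Longrightarrow> eigenvector A (col U j) (es ! j)" by (rule eig_cols[OF U UU les AD])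
  have nz: "\<And>j. j < n \<Longrightarrow> es ! j \<noteq> 0 \<Longrightarrow> L \<le> \<bar>es ! j\<bar>"
  proof -
    fix j assume j: "j < n" and e0: "es ! j \<noteq> 0"
    have "eigenvalue A (es ! j)" using eig[OF j] unfolding eigenvalue_def by blast
    thus "L \<le> \<bar>es ! j\<bar>" using evL e0 by blast
  qed
  have "lm \<in> set (rev (sort es))" unfolding lmdef using i1 iA les by (intro nth_mem) simp
  hence "lm \<in> set es" by simp
  then obtain j0 where j0: "j0 < n" "es ! j0 = lm" using les by (metis in_set_conv_nth)
  have lm0: "lm > 0" unfolding lm_def by (rule lpos)
  have lmL: "L \<le> lm" using nz[OF j0(1)] j0(2) lm0 by simp
  define M where "M = S * A * S\<^sup>T"
  have M: "M \<in> carrier_mat k k" unfolding M_def using S A by simp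
  have Msym: "M\<^sup>T = M"
  proof -
    have SA: "S * A \<in> carrier_mat k n" using S A by simp
    have ST: "S\<^sup>T \<in> carrier_mat n k" using S by simp
    have "M\<^sup>T = (S\<^sup>T)\<^sup>T * (S * A)\<^sup>T" unfolding M_def by (rule transpose_mult[OF SA ST])
    also have "(S * A)\<^sup>T = A\<^sup>T * S\<^sup>T" by (rule transpose_mult[OF S A])
    also have "(S\<^sup>T)\<^sup>T * (A\<^sup>T * S\<^sup>T) = S * (A * S\<^sup>T)" unfolding sym by simp
    also have "\<dots> = M" unfolding M_def by (rule assoc_mult_mat[OF S A ST, symmetric])
    finally show ?thesis .
  qed
  from spectral_full[OF M Msym] obtain V nus where V: "V \<in> carrier_mat k k" and VV: "V\<^sup>T * V = 1\<^sub>m k"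
    and VV': "V * V\<^sup>T = 1\<^sub>m k" and lnus: "length nus = k" and MD: "M = V * diagm k nus * V\<^sup>T"
    and mM: "mset nus = proots (char_poly M)" by blast
  have cnt: "i \<le> card {l. l < k \<and> lm - 51 * L \<le> nus ! l}"
    by (rule core[OF A S L U UU les AD V VV' MD[unfolded M_def] nz aL lm0 lmL cntA])
  have numM: "num_eigvals M = k" unfolding num_eigvals_def mM[symmetric] using lnus by simp
  have descM: "eigvals_desc M = rev (sort nus)" unfolding eigvals_desc_def mM[symmetric]
    by (simp add: sorted_list_of_multiset_mset)
  from sorted_desc_ge[OF i1, of nus "lm - 51 * L"] cnt lnus
  have "i \<le> length nus \<and> lm - 51 * L \<le> rev (sort nus) ! (i - 1)" by simp
  thus ?thesis unfolding M_def[symmetric] lm_def[symmetric] lam_def[of M] numM descM using lnus by simp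
qed


end
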